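(* Let $V$ be a commutative $\mathbb{C}$-algebra of functions of $x$ closed under $\partial_x$, $\mathbf t=(t_0=x,t_1,\dots)$, $u(\mathbf t)\in V[[t_1,t_2,\dots]]$ a solution of the KdV hierarchy, $\psi(z,\mathbf t)$ any wave function of $u$ and $\psi^*$ the dual wave function associated with $\psi$. With $$D(z,w,\mathbf t)=\frac{\psi(z,\mathbf t)\partial_x\psi^*(w,\mathbf t)-\psi^*(w,\mathbf t)\partial_x\psi(z,\mathbf t)}{w^2-z^2},$$ $$K(z,w,\mathbf t)=\frac{b(z^2,\mathbf t)\partial_xb(w^2,\mathbf t)-b(w^2,\mathbf t)\partial_xb(z^2,\mathbf t)}{2(w^2-z^2)}-\frac{w\,b(z^2,\mathbf t)+z\,b(w^2,\mathbf t)}{w^2-z^2},$$ one has $$K(z,w,\mathbf t)=b(z^2,\mathbf t)\frac{\psi(w,\mathbf t)}{\psi(z,\mathbf t)}D(z,w,\mathbf t)=b(w^2,\mathbf t)\frac{\psi^*(z,\mathbf t)}{\psi^*(w,\mathbf t)}D(z,w,\mathbf t)=\psi^*(z,\mathbf t)\psi(w,\mathbf t)D(z,w,\mathbf t).$$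
   Context: KdV hierarchy: $L=\partial_x^2+2u$, $A_k=\frac1{(2k+1)!!}(L^{(2k+1)/2})_+$; $u$ solves it if $\partial L/\partial t_k=[A_k,L]$ for all $k\ge0$. $b(\lambda,\mathbf t)=\sum_{k\ge-1}b_k(\mathbf t)\lambda^{-k-1}$, $b_{-1}=1$, is the unique such series with $b_k\in V[[t_{>0}]]$ satisfying $b b_{xx}-\frac12b_x^2-2(\lambda-2u)b^2=-2\lambda$. Wave functions: fix a ring $\widetilde V$ with $V\subseteq\partial_x(\widetilde V)\subseteq\widetilde V$; $\xi=\sum_{k\ge0}t_kz^{2k+1}/(2k+1)!!$. A wave function is $\psi=(1+\sum_{m\ge1}\phi_m(\mathbf t)z^{-m})e^{\xi}$, $\phi_m\in\widetilde V[[t_{>0}]]$, with $L\psi=z^2\psi$, $\partial_{t_k}\psi=A_k\psi$. The associated dual wave function is the unique $\psi^*=(1+\sum_{m\ge1}\phi_m^*(\mathbf t)z^{-m})e^{-\xi}$ with $L\psi^*=z^2\psi^*$, $\partial_{t_k}\psi^*=A_k\psi^*$, and such that $\partial_x^i(\psi)\psi^*$ (exponentials cancelling) has zero coefficient of $z^{-1}$ for all $i\ge0$. Products and quotients of wave functions are formal expressions in which the exponential factors combine in the obvious way. *)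

theory Defs
  imports Complex_Main "HOL-Library.Multiset"
begin

text \<open>The ring Vt (the paper's V-tilde) is the type 'a (a commutative ring).
  V is a subset of it.  dx is the derivation d/dx on Vt, sc the structure map
  of the C-algebra (complex scalars).\<close>

definition kdv_setting :: "(complex \<Rightarrow> 'a::comm_ring_1) \<Rightarrow> ('a \<Rightarrow> 'a) \<Rightarrow> 'a set \<Rightarrow> bool" where
  "kdv_setting sc dx V \<longleftrightarrow>
     sc 1 = 1 \<and> (\<forall>a b. sc (a + b) = sc a + sc b) \<and> (\<forall>a b. sc (a * b) = sc a * sc b) \<and>
     (\<forall>a b. dx (a + b) = dx a + dx b) \<and> (\<forall>a b. dx (a * b) = dx a * b + a * dx b) \<and>
     (\<forall>c. dx (sc c) = 0) \<and>
     range sc \<subseteq> V \<and>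
     (\<forall>a\<in>V. \<forall>b\<in>V. a + b \<in> V \<and> a * b \<in> V) \<and> (\<forall>a\<in>V. - a \<in> V) \<and>
     (\<forall>a\<in>V. dx a \<in> V) \<and>
     V \<subseteq> range dx"

text \<open>A monomial is a multiset of indices; the index j stands for the variable t_(j+1).\<close>

type_synonym mon = "nat multiset"
type_synonym 'a ser = "mon \<Rightarrow> 'a"

definition ser_zero :: "'a::comm_ring_1 ser" where "ser_zero = (\<lambda>M. 0)"
definition ser_one :: "'a::comm_ring_1 ser" where "ser_one = (\<lambda>M. if M = {#} then 1 else 0)"
definition ser_add :: "'a::comm_ring_1 ser \<Rightarrow> 'a ser \<Rightarrow> 'a ser" where
  "ser_add f g = (\<lambda>M. f M + g M)"
definition ser_sub :: "'a::comm_ring_1 ser \<Rightarrow> 'a ser \<Rightarrow> 'a ser" where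
  "ser_sub f g = (\<lambda>M. f M - g M)"
definition ser_scale :: "'a::comm_ring_1 \<Rightarrow> 'a ser \<Rightarrow> 'a ser" where
  "ser_scale c f = (\<lambda>M. c * f M)"
definition ser_mult :: "'a::comm_ring_1 ser \<Rightarrow> 'a ser \<Rightarrow> 'a ser" where
  "ser_mult f g = (\<lambda>M. \<Sum>N\<in>{N. N \<subseteq># M}. f N * g (M - N))"

text \<open>Partial derivative with respect to t_k; t_0 = x acts through dx on coefficients.\<close>
definition ser_dt :: "('a::comm_ring_1 \<Rightarrow> 'a) \<Rightarrow> nat \<Rightarrow> 'a ser \<Rightarrow> 'a ser" where
  "ser_dt dx k f = (if k = 0 then (\<lambda>M. dx (f M))
      else (\<lambda>M. of_nat (count M (k - 1) + 1) * f (add_mset (k - 1) M)))"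

definition ser_in :: "'a set \<Rightarrow> 'a ser \<Rightarrow> bool" where
  "ser_in S f \<longleftrightarrow> (\<forall>M. f M \<in> S)"

text \<open>F i is the coefficient of z^i.\<close>
type_synonym 'a lser = "int \<Rightarrow> 'a ser"

definition lmult :: "'a::comm_ring_1 lser \<Rightarrow> 'a lser \<Rightarrow> 'a lser" where
  "lmult F G = (\<lambda>i M. \<Sum>j\<in>{j. F j \<noteq> ser_zero \<and> G (i - j) \<noteq> ser_zero}. ser_mult (F j) (G (i - j)) M)"
definition ladd :: "'a::comm_ring_1 lser \<Rightarrow> 'a lser \<Rightarrow> 'a lser" where
  "ladd F G = (\<lambda>i. ser_add (F i) (G i))"
definition lsub :: "'a::comm_ring_1 lser \<Rightarrow> 'a lser \<Rightarrow> 'a lser" where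
  "lsub F G = (\<lambda>i. ser_sub (F i) (G i))"
definition lscale :: "'a::comm_ring_1 \<Rightarrow> 'a lser \<Rightarrow> 'a lser" where
  "lscale c F = (\<lambda>i. ser_scale c (F i))"
definition lconst :: "'a::comm_ring_1 ser \<Rightarrow> 'a lser" where
  "lconst f = (\<lambda>i. if i = 0 then f else ser_zero)"
definition lvar :: "'a::comm_ring_1 lser" where
  "lvar = (\<lambda>i. if i = 1 then ser_one else ser_zero)"
definition ldx :: "('a::comm_ring_1 \<Rightarrow> 'a) \<Rightarrow> 'a lser \<Rightarrow> 'a lser" where
  "ldx dx F = (\<lambda>i. ser_dt dx 0 (F i))"

text \<open>(d/dx + s z) acting on the series part: for a product F e^(s xi) one has
  d/dx (F e^(s xi)) = (shiftd dx s F) e^(s xi).\<close>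
definition shiftd :: "('a::comm_ring_1 \<Rightarrow> 'a) \<Rightarrow> 'a \<Rightarrow> 'a lser \<Rightarrow> 'a lser" where
  "shiftd dx s F = (\<lambda>i. ser_add (ser_dt dx 0 (F i)) (ser_scale s (F (i - 1))))"

text \<open>Series part 1 + sum_{m>=1} phi_m z^(-m) of a (dual) wave function.\<close>
definition wser :: "(nat \<Rightarrow> 'a::comm_ring_1 ser) \<Rightarrow> 'a lser" where
  "wser phi = (\<lambda>i. if i = 0 then ser_one else if i < 0 then phi (nat (- i)) else ser_zero)"

text \<open>P i is the coefficient of d^i (d = d/dx), written on the left.\<close>
type_synonym 'a psdo = "int \<Rightarrow> 'a ser"

definition psdo_one :: "'a::comm_ring_1 psdo" where
  "psdo_one = (\<lambda>i. if i = 0 then ser_one else ser_zero)"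
definition psdo_sub :: "'a::comm_ring_1 psdo \<Rightarrow> 'a psdo \<Rightarrow> 'a psdo" where
  "psdo_sub P Q = (\<lambda>i. ser_sub (P i) (Q i))"

definition ibinom :: "int \<Rightarrow> nat \<Rightarrow> int" where
  "ibinom i j = (\<Prod>l<j. i - int l) div fact j"

text \<open>Composition: d^i b = sum_{j>=0} binom(i,j) b^(j) d^(i-j).\<close>
definition psdo_mult :: "('a::comm_ring_1 \<Rightarrow> 'a) \<Rightarrow> 'a psdo \<Rightarrow> 'a psdo \<Rightarrow> 'a psdo" where
  "psdo_mult dx P Q = (\<lambda>m M. \<Sum>(i, k)\<in>{(i, k). P i \<noteq> ser_zero \<and> Q k \<noteq> ser_zero \<and> m \<le> i + k}.
       of_int (ibinom i (nat (i + k - m))) *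
       ser_mult (P i) ((ser_dt dx 0 ^^ nat (i + k - m)) (Q k)) M)"

definition psdo_pow :: "('a::comm_ring_1 \<Rightarrow> 'a) \<Rightarrow> 'a psdo \<Rightarrow> nat \<Rightarrow> 'a psdo" where
  "psdo_pow dx P n = (psdo_mult dx P ^^ n) psdo_one"

definition Lop :: "'a::comm_ring_1 ser \<Rightarrow> 'a psdo" where
  "Lop u = (\<lambda>i. if i = 2 then ser_one else if i = 0 then ser_scale 2 u else ser_zero)"

definition sqrtL :: "('a::comm_ring_1 \<Rightarrow> 'a) \<Rightarrow> 'a ser \<Rightarrow> 'a psdo" where
  "sqrtL dx u = (THE Q. Q 1 = ser_one \<and> (\<forall>i>1. Q i = ser_zero) \<and> psdo_mult dx Q Q = Lop u)"

definition dfact :: "nat \<Rightarrow> nat" where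
  "dfact k = (\<Prod>i\<le>k. 2 * i + 1)"

definition Aop :: "(complex \<Rightarrow> 'a::comm_ring_1) \<Rightarrow> ('a \<Rightarrow> 'a) \<Rightarrow> 'a ser \<Rightarrow> nat \<Rightarrow> 'a psdo" where
  "Aop sc dx u k = (\<lambda>i. if 0 \<le> i
      then ser_scale (sc (1 / of_nat (dfact k))) (psdo_pow dx (sqrtL dx u) (2 * k + 1) i)
      else ser_zero)"

definition kdv_solution :: "(complex \<Rightarrow> 'a::comm_ring_1) \<Rightarrow> ('a \<Rightarrow> 'a) \<Rightarrow> 'a ser \<Rightarrow> bool" where
  "kdv_solution sc dx u \<longleftrightarrow>
     (\<forall>k. (\<lambda>i. ser_dt dx k (Lop u i)) =
          psdo_sub (psdo_mult dx (Aop sc dx u k) (Lop u)) (psdo_mult dx (Lop u) (Aop sc dx u k)))"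

text \<open>A differential operator (nonnegative part of A) applied to F e^(s xi);
  the result is (apply_op dx s A F) e^(s xi).\<close>
definition apply_op :: "('a::comm_ring_1 \<Rightarrow> 'a) \<Rightarrow> 'a \<Rightarrow> 'a psdo \<Rightarrow> 'a lser \<Rightarrow> 'a lser" where
  "apply_op dx s A F = (\<lambda>i M. \<Sum>n\<in>{n::nat. A (int n) \<noteq> ser_zero}.
       ser_mult (A (int n)) ((shiftd dx s ^^ n) F i) M)"

text \<open>(1 + sum phi_m z^(-m)) e^(s xi) with s = 1 (wave function) or s = -1 (dual)
  satisfies L psi = z^2 psi and d psi / dt_k = A_k psi for all k.
  Note d/dt_k e^(s xi) = s z^(2k+1)/(2k+1)!! e^(s xi).\<close>
definition wave_eqs :: "(complex \<Rightarrow> 'a::comm_ring_1) \<Rightarrow> ('a \<Rightarrow> 'a) \<Rightarrow> 'a ser \<Rightarrow> 'a \<Rightarrow> (nat \<Rightarrow> 'a ser) \<Rightarrow> bool" where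
  "wave_eqs sc dx u s phi \<longleftrightarrow>
     apply_op dx s (Lop u) (wser phi) = (\<lambda>i. wser phi (i - 2)) \<and>
     (\<forall>k. (\<lambda>i. ser_add (ser_dt dx k (wser phi i))
                  (ser_scale (s * sc (1 / of_nat (dfact k))) (wser phi (i - int (2 * k + 1)))))
          = apply_op dx s (Aop sc dx u k) (wser phi))"

definition is_wave_function :: "(complex \<Rightarrow> 'a::comm_ring_1) \<Rightarrow> ('a \<Rightarrow> 'a) \<Rightarrow> 'a ser \<Rightarrow> (nat \<Rightarrow> 'a ser) \<Rightarrow> bool" where
  "is_wave_function sc dx u phi \<longleftrightarrow> wave_eqs sc dx u 1 phi"

text \<open>phis is (the series part of) the dual wave function associated with phi:
  the z^(-1) coefficient of (d^i psi) psi^* vanishes for all i.\<close>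
definition is_dual_wave_function :: "(complex \<Rightarrow> 'a::comm_ring_1) \<Rightarrow> ('a \<Rightarrow> 'a) \<Rightarrow> 'a ser \<Rightarrow> (nat \<Rightarrow> 'a ser) \<Rightarrow> (nat \<Rightarrow> 'a ser) \<Rightarrow> bool" where
  "is_dual_wave_function sc dx u phi phis \<longleftrightarrow>
     wave_eqs sc dx u (-1) phis \<and>
     (\<forall>i::nat. lmult ((shiftd dx 1 ^^ i) (wser phi)) (wser phis) (-1) = ser_zero)"

text \<open>b(lambda) as a Laurent series in lambda: coefficient of lambda^0 is b_(-1) = 1,
  coefficient of lambda^(-k-1) is b_k.\<close>
definition bser :: "(complex \<Rightarrow> 'a::comm_ring_1) \<Rightarrow> ('a \<Rightarrow> 'a) \<Rightarrow> 'a set \<Rightarrow> 'a ser \<Rightarrow> 'a lser" where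
  "bser sc dx V u = (THE B. B 0 = ser_one \<and> (\<forall>i>0. B i = ser_zero) \<and> (\<forall>i. ser_in V (B i)) \<and>
      lsub (lsub (lmult B (ldx dx (ldx dx B)))
                 (lscale (sc (1/2)) (lmult (ldx dx B) (ldx dx B))))
           (lscale 2 (lmult (lsub lvar (lconst (ser_scale 2 u))) (lmult B B)))
      = lscale (-2) lvar)"

text \<open>Substitution lambda := z^2.\<close>
definition lsq :: "'a::comm_ring_1 lser \<Rightarrow> 'a lser" where
  "lsq F = (\<lambda>i. if even i then F (i div 2) else ser_zero)"

text \<open>P i j is the coefficient of z^i w^j.\<close>
type_synonym 'a bser = "int \<Rightarrow> int \<Rightarrow> 'a ser"

definition bz :: "'a::comm_ring_1 lser \<Rightarrow> 'a bser" where
  "bz F = (\<lambda>i j. if j = 0 then F i else ser_zero)"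
definition bw :: "'a::comm_ring_1 lser \<Rightarrow> 'a bser" where
  "bw F = (\<lambda>i j. if i = 0 then F j else ser_zero)"
definition bmult :: "'a::comm_ring_1 bser \<Rightarrow> 'a bser \<Rightarrow> 'a bser" where
  "bmult P Q = (\<lambda>i j M. \<Sum>(a, c)\<in>{(a, c). P a c \<noteq> ser_zero \<and> Q (i - a) (j - c) \<noteq> ser_zero}.
       ser_mult (P a c) (Q (i - a) (j - c)) M)"
definition badd :: "'a::comm_ring_1 bser \<Rightarrow> 'a bser \<Rightarrow> 'a bser" where
  "badd P Q = (\<lambda>i j. ser_add (P i j) (Q i j))"
definition bsub :: "'a::comm_ring_1 bser \<Rightarrow> 'a bser \<Rightarrow> 'a bser" where
  "bsub P Q = (\<lambda>i j. ser_sub (P i j) (Q i j))"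
definition bscale :: "'a::comm_ring_1 \<Rightarrow> 'a bser \<Rightarrow> 'a bser" where
  "bscale c P = (\<lambda>i j. ser_scale c (P i j))"
definition bdx :: "('a::comm_ring_1 \<Rightarrow> 'a) \<Rightarrow> 'a bser \<Rightarrow> 'a bser" where
  "bdx dx P = (\<lambda>i j. ser_dt dx 0 (P i j))"
definition bbdd :: "'a::comm_ring_1 bser \<Rightarrow> bool" where
  "bbdd P \<longleftrightarrow> (\<exists>n. \<forall>i j. n < i \<or> n < j \<longrightarrow> P i j = ser_zero)"
text \<open>Quotient P / Q (Q will be a unit).\<close>
definition bquot :: "'a::comm_ring_1 bser \<Rightarrow> 'a bser \<Rightarrow> 'a bser" where
  "bquot P Q = (THE R. bbdd R \<and> bmult Q R = P)"

text \<open>(w^2 - z^2) D(z,w) with the factor e^(xi(z) - xi(w)) removed: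
  psi(z) d psi^*(w) - psi^*(w) d psi(z).\<close>
definition Dnum :: "('a::comm_ring_1 \<Rightarrow> 'a) \<Rightarrow> (nat \<Rightarrow> 'a ser) \<Rightarrow> (nat \<Rightarrow> 'a ser) \<Rightarrow> 'a bser" where
  "Dnum dx phi phis =
     bsub (bmult (bz (wser phi)) (bw (shiftd dx (-1) (wser phis))))
          (bmult (bw (wser phis)) (bz (shiftd dx 1 (wser phi))))"

definition Knum :: "(complex \<Rightarrow> 'a::comm_ring_1) \<Rightarrow> ('a \<Rightarrow> 'a) \<Rightarrow> 'a set \<Rightarrow> 'a ser \<Rightarrow> 'a bser" where
  "Knum sc dx V u =
     (let Bz = bz (lsq (bser sc dx V u)); Bw = bw (lsq (bser sc dx V u)) in
      bsub (bscale (sc (1/2)) (bsub (bmult Bz (bdx dx Bw)) (bmult Bw (bdx dx Bz))))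
           (badd (bmult (bw lvar) Bz) (bmult (bz lvar) Bw)))"

end

theory Submission
  imports Defs "HOL-Computational_Algebra.Formal_Laurent_Series"
begin


lemma msub_finite: "finite {N. N \<subseteq># (M::'b multiset)}"
proof (induction M)
  case empty then show ?case by simp
next
  case (add x M)
  have "{N. N \<subseteq># add_mset x M} \<subseteq> {N. N \<subseteq># M} \<union> add_mset x ` {N. N \<subseteq># M}"
  proof
    fix N assume "N \<in> {N. N \<subseteq># add_mset x M}"
    then have N: "N \<subseteq># add_mset x M" by simp
    show "N \<in> {N. N \<subseteq># M} \<union> add_mset x ` {N. N \<subseteq># M}"
    proof (cases "x \<in># N")
      case True
      then have "N = add_mset x (N - {#x#})" by simp
      moreover have "N - {#x#} \<subseteq># M" using N True
        by (metis insert_DiffM add_mset_remove_trivial insert_subset_eq_iff)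
      ultimately show ?thesis by blast
    next
      case False
      then have "N \<subseteq># M" using N
        by (metis Diff_eq_empty_iff_mset minus_add_mset_if_not_in_lhs)
      then show ?thesis by blast
    qed
  qed
  then show ?case using add.IH by (meson finite_Un finite_imageI finite_subset)
qed

unbundle fps_syntax

typedef 'a ts = "UNIV :: (nat multiset \<Rightarrow> 'a) set" morphisms tsf TS by simp

lemma tsf_TS[simp]: "tsf (TS f) = f" by (simp add: TS_inverse)
lemma TS_tsf[simp]: "TS (tsf a) = a" by (simp add: tsf_inverse)
lemma ts_eqI: "(\<And>M. tsf a M = tsf b M) \<Longrightarrow> a = b"
  by (metis TS_tsf ext)
lemma ts_eq_iff: "a = b \<longleftrightarrow> (\<forall>M. tsf a M = tsf b M)"
  using ts_eqI by auto

lemma msub_dd: "a \<subseteq># (M::nat multiset) \<Longrightarrow> M - (M - a) = a"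
  by (metis add.commute diff_union_cancelR subset_mset.diff_add)
lemma msub_add: "\<lbrakk>x \<subseteq># M; y \<subseteq># M - x\<rbrakk> \<Longrightarrow> x + y \<subseteq># (M::nat multiset)"
  by (simp add: add.commute subset_mset.le_diff_conv2)

lemma ser_mult_comm: "ser_mult f g M = ser_mult g f (M::nat multiset)"
  unfolding ser_mult_def
  by (rule sum.reindex_bij_witness[where i="\<lambda>N. M - N" and j="\<lambda>N. M - N"])
     (auto simp: msub_dd mult.commute)

lemma ser_mult_assoc:
  fixes f g h :: "'a::comm_ring_1 ser"
  shows "ser_mult (ser_mult f g) h M = ser_mult f (ser_mult g h) M"
proof -
  have "ser_mult (ser_mult f g) h M =
     (\<Sum>A\<in>{A. A \<subseteq># M}. \<Sum>N\<in>{N. N \<subseteq># A}. f N * g (A - N) * h (M - A))"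
    unfolding ser_mult_def by (simp add: sum_distrib_right)
  also have "\<dots> = (\<Sum>(A, N)\<in>Sigma {A. A \<subseteq># M} (\<lambda>A. {N. N \<subseteq># A}). f N * g (A - N) * h (M - A))"
    by (rule sum.Sigma) (auto simp: msub_finite)
  also have "\<dots> = (\<Sum>(N, K)\<in>Sigma {N. N \<subseteq># M} (\<lambda>N. {K. K \<subseteq># M - N}). f N * (g K * h (M - N - K)))"
    apply (rule sum.reindex_bij_witness[where i="\<lambda>(N, K). (N + K, N)" and j="\<lambda>(A, N). (N, A - N)"])
    apply (auto simp: msub_add subset_mset.add_diff_inverse mult.assoc)
    using subset_eq_diff_conv subset_mset.diff_add by fastforce
  also have "\<dots> = (\<Sum>N\<in>{N. N \<subseteq># M}. \<Sum>K\<in>{K. K \<subseteq># M - N}. f N * (g K * h (M - N - K)))"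
    by (rule sum.Sigma[symmetric]) (auto simp: msub_finite)
  also have "\<dots> = ser_mult f (ser_mult g h) M"
    unfolding ser_mult_def by (simp add: sum_distrib_left)
  finally show ?thesis .
qed

instantiation ts :: (comm_ring_1) comm_ring_1
begin
definition zero_ts_def: "0 = TS ser_zero"
definition one_ts_def: "1 = TS ser_one"
definition plus_ts_def: "a + b = TS (ser_add (tsf a) (tsf b))"
definition minus_ts_def: "a - b = TS (ser_sub (tsf a) (tsf b))"
definition uminus_ts_def: "- a = TS (\<lambda>M. - tsf a M)"
definition times_ts_def: "a * b = TS (ser_mult (tsf a) (tsf b))"
instance
proof
  fix a b c :: "'a ts"
  show "a * b * c = a * (b * c)"
    by (simp add: times_ts_def ts_eq_iff ser_mult_assoc)
  show "a * b = b * a"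
    by (simp add: times_ts_def ts_eq_iff ser_mult_comm)
  show "1 * a = a"
  proof -
    have "\<And>M. (\<Sum>N\<in>{N. N \<subseteq># M}. (if N = {#} then 1 else 0) * tsf a (M - N)) =
       (\<Sum>N\<in>{N. N \<subseteq># M}. if N = {#} then tsf a (M - N) else 0)"
      by (rule sum.cong) auto
    then show ?thesis
      by (simp add: times_ts_def one_ts_def ts_eq_iff ser_mult_def ser_one_def msub_finite)
  qed
  show "a + b + c = a + (b + c)"
    by (simp add: plus_ts_def ts_eq_iff ser_add_def add.assoc)
  show "a + b = b + a"
    by (simp add: plus_ts_def ts_eq_iff ser_add_def add.commute)
  show "0 + a = a"
    by (simp add: plus_ts_def zero_ts_def ts_eq_iff ser_add_def ser_zero_def)
  show "- a + a = 0"
    by (simp add: plus_ts_def zero_ts_def uminus_ts_def ts_eq_iff ser_add_def ser_zero_def)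
  show "a - b = a + - b"
    by (simp add: plus_ts_def minus_ts_def uminus_ts_def ts_eq_iff ser_add_def ser_sub_def)
  show "(a + b) * c = a * c + b * c"
    by (simp add: plus_ts_def times_ts_def ts_eq_iff ser_add_def ser_mult_def
        distrib_right sum.distrib)
  show "(0::'a ts) \<noteq> 1"
    by (simp add: zero_ts_def one_ts_def ts_eq_iff ser_zero_def ser_one_def)
qed
end


lemma tsf_zero[simp]: "tsf 0 = ser_zero" by (simp add: zero_ts_def)
lemma tsf_one[simp]: "tsf 1 = ser_one" by (simp add: one_ts_def)
lemma tsf_add[simp]: "tsf (a + b) M = tsf a M + tsf b M" by (simp add: plus_ts_def ser_add_def)
lemma tsf_diff[simp]: "tsf (a - b) M = tsf a M - tsf b M" by (simp add: minus_ts_def ser_sub_def)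
lemma tsf_uminus[simp]: "tsf (- a) M = - tsf a M" by (simp add: uminus_ts_def)
lemma tsf_mult: "tsf (a * b) = ser_mult (tsf a) (tsf b)" by (simp add: times_ts_def)
lemma tsf_sum: "tsf (sum f S) M = (\<Sum>x\<in>S. tsf (f x) M)"
  by (induction S rule: infinite_finite_induct) (auto simp: ser_zero_def)
lemma TS_zero: "TS ser_zero = 0" by (simp add: zero_ts_def)
lemma TS_eq_zero_iff: "TS f = 0 \<longleftrightarrow> f = ser_zero"
  by (metis TS_zero tsf_TS)

definition tsc :: "'a::comm_ring_1 \<Rightarrow> 'a ts" where
  "tsc c = TS (\<lambda>M. if M = {#} then c else 0)"

lemma tsc_mult_eq: "tsf (tsc c * a) M = c * tsf a M"
proof -
  have "(\<Sum>N\<in>{N. N \<subseteq># M}. (if N = {#} then c else 0) * tsf a (M - N)) =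
       (\<Sum>N\<in>{N. N \<subseteq># M}. if N = {#} then c * tsf a (M - N) else 0)"
    by (rule sum.cong) auto
  then show ?thesis
    by (simp add: tsf_mult tsc_def ser_mult_def msub_finite)
qed

lemma ser_scale_eq: "ser_scale c f = tsf (tsc c * TS f)"
  by (rule ext) (simp add: tsc_mult_eq ser_scale_def)

lemma tsc_add: "tsc (a + b) = tsc a + tsc b" by (simp add: tsc_def ts_eq_iff)
lemma tsc_diff: "tsc (a - b) = tsc a - tsc b" by (simp add: tsc_def ts_eq_iff)
lemma tsc_uminus: "tsc (- a) = - tsc a" by (simp add: tsc_def ts_eq_iff)
lemma tsc_mult: "tsc (a * b) = tsc a * tsc b"
  by (simp add: ts_eq_iff tsc_mult_eq) (simp add: tsc_def)
lemma tsc_one: "tsc 1 = 1" by (simp add: tsc_def ts_eq_iff ser_one_def)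
lemma tsc_zero: "tsc 0 = 0" by (simp add: tsc_def ts_eq_iff ser_zero_def)
lemma tsc_of_nat: "tsc (of_nat n) = of_nat n"
  by (induction n) (simp_all add: tsc_zero tsc_add tsc_one)
lemma tsc_numeral: "tsc (numeral n) = numeral n"
  by (metis of_nat_numeral tsc_of_nat)

definition isder :: "('a::comm_ring_1 \<Rightarrow> 'a) \<Rightarrow> bool" where
  "isder dx \<longleftrightarrow> (\<forall>a b. dx (a + b) = dx a + dx b) \<and> (\<forall>a b. dx (a * b) = dx a * b + a * dx b)"

lemma isder_add: "isder dx \<Longrightarrow> dx (a + b) = dx a + dx b" by (simp add: isder_def)
lemma isder_mult: "isder dx \<Longrightarrow> dx (a * b) = dx a * b + a * dx b" by (simp add: isder_def)
lemma isder_zero: "isder dx \<Longrightarrow> dx 0 = 0"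
  using isder_add[of dx 0 0] by simp
lemma isder_uminus: "isder dx \<Longrightarrow> dx (- a) = - dx a"
  using isder_add[of dx a "- a"] isder_zero[of dx]
  by (simp add: eq_neg_iff_add_eq_0 add.commute)
lemma isder_diff: "isder dx \<Longrightarrow> dx (a - b) = dx a - dx b"
  using isder_add[of dx a "- b"] isder_uminus[of dx b] by simp
lemma isder_sum: "isder dx \<Longrightarrow> dx (sum f S) = (\<Sum>x\<in>S. dx (f x))"
  by (induction S rule: infinite_finite_induct) (auto simp: isder_zero isder_add)

definition tD :: "('a::comm_ring_1 \<Rightarrow> 'a) \<Rightarrow> 'a ts \<Rightarrow> 'a ts" where
  "tD dx a = TS (\<lambda>M. dx (tsf a M))"

lemma tsf_tD[simp]: "tsf (tD dx a) M = dx (tsf a M)" by (simp add: tD_def)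

lemma tD_isder: assumes "isder dx" shows "isder (tD dx)"
  unfolding isder_def
proof (intro conjI allI)
  fix a b :: "'a ts"
  show "tD dx (a + b) = tD dx a + tD dx b"
    by (simp add: ts_eq_iff isder_add[OF assms])
  show "tD dx (a * b) = tD dx a * b + a * tD dx b"
    by (simp add: ts_eq_iff tsf_mult ser_mult_def isder_sum[OF assms] isder_mult[OF assms]
        sum.distrib)
qed

lemma tD_tsc: "tD dx (tsc c) = tsc (dx c)" if "isder dx"
  by (simp add: ts_eq_iff tsc_def isder_zero[OF that])

lemma ser_dt0_eq: "ser_dt dx 0 f = tsf (tD dx (TS f))"
  by (simp add: ser_dt_def fun_eq_iff)


lemma fls_times_nth_lb:
  fixes f g :: "'b::comm_ring_1 fls"
  assumes fa: "\<And>i. i < a \<Longrightarrow> f $$ i = 0" and gb: "\<And>i. i < b \<Longrightarrow> g $$ i = 0"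
  shows "(f*g) $$ n = (\<Sum>i=a..n-b. f $$ i * g $$ (n-i))"
proof (cases "f = 0 \<or> g = 0")
  case True then show ?thesis by auto
next
  case False
  then have nz: "f \<noteq> 0" "g \<noteq> 0" by auto
  have da: "a \<le> fls_subdegree f" using fls_subdegree_geI[OF nz(1)] fa by blast
  have db: "b \<le> fls_subdegree g" using fls_subdegree_geI[OF nz(2)] gb by blast
  have "(f*g) $$ n = (\<Sum>i=fls_subdegree f..n - fls_subdegree g. f $$ i * g $$ (n-i))"
    by (rule fls_times_nth(2))
  also have "\<dots> = (\<Sum>i=a..n-b. f $$ i * g $$ (n-i))"
  proof (rule sum.mono_neutral_left)
    show "\<forall>i\<in>{a..n - b} - {fls_subdegree f..n - fls_subdegree g}. f $$ i * g $$ (n - i) = 0"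
    proof
      fix i assume "i \<in> {a..n - b} - {fls_subdegree f..n - fls_subdegree g}"
      then have "i < fls_subdegree f \<or> n - i < fls_subdegree g" by auto
      then show "f $$ i * g $$ (n - i) = 0" by auto
    qed
  qed (use da db in auto)
  finally show ?thesis .
qed

definition fmap :: "('b::zero \<Rightarrow> 'c::zero) \<Rightarrow> 'b fls \<Rightarrow> 'c fls" where
  "fmap h f = Abs_fls (\<lambda>k. h (f $$ k))"

lemma fmap_nth[simp]: "h 0 = 0 \<Longrightarrow> fmap h f $$ k = h (f $$ k)"
  unfolding fmap_def
  by (rule nth_Abs_fls_lower_bound[where N="fls_subdegree f"]) auto

definition ishom :: "('b::comm_ring_1 \<Rightarrow> 'c::comm_ring_1) \<Rightarrow> bool" where
  "ishom h \<longleftrightarrow> (\<forall>a b. h (a + b) = h a + h b) \<and> (\<forall>a b. h (a * b) = h a * h b) \<and> h 1 = 1"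

lemma ishom_add: "ishom h \<Longrightarrow> h (a + b) = h a + h b" by (simp add: ishom_def)
lemma ishom_mult: "ishom h \<Longrightarrow> h (a * b) = h a * h b" by (simp add: ishom_def)
lemma ishom_one: "ishom h \<Longrightarrow> h 1 = 1" by (simp add: ishom_def)
lemma ishom_zero: "ishom h \<Longrightarrow> h 0 = 0"
  using ishom_add[of h 0 0] by simp
lemma ishom_uminus: "ishom h \<Longrightarrow> h (- a) = - h a"
  using ishom_add[of h a "- a"] ishom_zero[of h]
  by (simp add: eq_neg_iff_add_eq_0 add.commute)
lemma ishom_diff: "ishom h \<Longrightarrow> h (a - b) = h a - h b"
  using ishom_add[of h a "- b"] ishom_uminus[of h b] by simp
lemma ishom_sum: "ishom h \<Longrightarrow> h (sum f S) = (\<Sum>x\<in>S. h (f x))"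
  by (induction S rule: infinite_finite_induct) (auto simp: ishom_zero ishom_add)

lemma fmap_add: "(\<And>a b. h (a + b) = h a + h b) \<Longrightarrow> h 0 = 0 \<Longrightarrow> fmap h (f + g) = fmap h f + fmap h g"
  by (rule fls_eqI) simp

lemma fmap_hom_mult:
  fixes f g :: "'b::comm_ring_1 fls"
  assumes h: "ishom (h :: 'b \<Rightarrow> 'c::comm_ring_1)"
  shows "fmap h (f * g) = fmap h f * fmap h g"
proof (rule fls_eqI)
  fix n
  have h0: "h 0 = 0" by (rule ishom_zero[OF h])
  have "fmap h (f * g) $$ n = h (\<Sum>i=fls_subdegree f..n-fls_subdegree g. f $$ i * g $$ (n-i))"
    using h0 by (simp add: fls_times_nth(2))
  also have "\<dots> = (\<Sum>i=fls_subdegree f..n-fls_subdegree g. h (f $$ i) * h (g $$ (n-i)))"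
    by (simp add: ishom_sum[OF h] ishom_mult[OF h])
  also have "\<dots> = (fmap h f * fmap h g) $$ n"
    by (subst fls_times_nth_lb[where a="fls_subdegree f" and b="fls_subdegree g"]) (simp_all add: h0)
  finally show "fmap h (f * g) $$ n = (fmap h f * fmap h g) $$ n" .
qed

lemma fmap_der_mult:
  fixes f g :: "'b::comm_ring_1 fls"
  assumes h: "isder h"
  shows "fmap h (f * g) = fmap h f * g + f * fmap h g"
proof (rule fls_eqI)
  fix n
  have h0: "h 0 = 0" by (rule isder_zero[OF h])
  have "fmap h (f * g) $$ n = h (\<Sum>i=fls_subdegree f..n-fls_subdegree g. f $$ i * g $$ (n-i))"
    using h0 by (simp add: fls_times_nth(2))
  also have "\<dots> = (\<Sum>i=fls_subdegree f..n-fls_subdegree g. h (f $$ i) * g $$ (n-i))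
                + (\<Sum>i=fls_subdegree f..n-fls_subdegree g. f $$ i * h (g $$ (n-i)))"
    by (simp add: isder_sum[OF h] isder_mult[OF h] sum.distrib)
  also have "\<dots> = (fmap h f * g) $$ n + (f * fmap h g) $$ n"
    by (subst (1 2) fls_times_nth_lb[where a="fls_subdegree f" and b="fls_subdegree g"])
       (simp_all add: h0)
  finally show "fmap h (f * g) $$ n = (fmap h f * g + f * fmap h g) $$ n" by simp
qed

lemma fmap_der_isder: "isder h \<Longrightarrow> isder (fmap h)"
  unfolding isder_def
  by (simp add: fmap_der_mult[unfolded isder_def] fmap_add isder_zero[unfolded isder_def])

lemma fmap_hom_ishom: "ishom h \<Longrightarrow> ishom (fmap h)"
  unfolding ishom_def
  by (auto simp: fmap_hom_mult[unfolded ishom_def] fmap_add ishom_zero[unfolded ishom_def]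
      intro!: fls_eqI)

lemma fmap_const: "h 0 = 0 \<Longrightarrow> fmap h (fls_const c) = fls_const (h c)"
  by (rule fls_eqI) simp

lemma fmap_shift: "h 0 = 0 \<Longrightarrow> fmap h (fls_shift k f) = fls_shift k (fmap h f)"
  by (rule fls_eqI) simp

lemma fls_const_ishom: "ishom (fls_const :: 'b::comm_ring_1 \<Rightarrow> 'b fls)"
  unfolding ishom_def by (simp add: fls_plus_const)


abbreviation Zs :: "'r::comm_ring_1 fls" where "Zs \<equiv> fls_X_inv"

lemma Z_nth: "(Zs * (x::'r::comm_ring_1 fls)) $$ k = x $$ (k + 1)"
  by (simp add: fls_X_inv_times_conv_shift)

lemma isder_one: "isder d \<Longrightarrow> d 1 = 0"
  using isder_mult[of d 1 1] by simp

lemma isder_of_nat: "isder d \<Longrightarrow> d (of_nat n) = 0"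
  by (induction n) (simp_all add: isder_zero isder_add isder_one)

lemma isder_numeral: "isder d \<Longrightarrow> d (numeral n) = 0"
  by (metis isder_of_nat of_nat_numeral)

lemma isder_scal: "isder d \<Longrightarrow> d c = 0 \<Longrightarrow> d (c * x) = c * d x"
  by (simp add: isder_mult)

lemma D_nth: "isder d \<Longrightarrow> fmap d x $$ k = d (x $$ k)"
  by (simp add: isder_zero)

lemma D_Z: assumes "isder d" shows "fmap d (Zs * x) = Zs * fmap d x"
  using assms by (simp add: fls_X_inv_times_conv_shift fmap_shift isder_zero)

lemma D_Zc: assumes "isder d" shows "fmap d Zs = 0"
proof -
  have "fmap d (fls_const 1) = 0" using fmap_const[of d 1] assms by (simp add: isder_zero isder_one)
  then show ?thesis using D_Z[OF assms, of 1] by simp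
qed

lemma D_C: assumes "isder d" shows "fmap d (fls_const c) = fls_const (d c)"
  using assms by (simp add: fmap_const isder_zero)

definition Dl :: "('r::comm_ring_1 \<Rightarrow> 'r) \<Rightarrow> 'r fls \<Rightarrow> 'r fls" where
  "Dl d h = fmap d h + Zs * h"

lemma Dl_add: "isder d \<Longrightarrow> Dl d (a + b) = Dl d a + Dl d b"
  unfolding Dl_def using fmap_der_isder[of d] by (simp add: isder_add distrib_left)

lemma Dlpow_add: "isder d \<Longrightarrow> (Dl d ^^ j) (a + b) = (Dl d ^^ j) a + (Dl d ^^ j) b"
  by (induction j) (simp_all add: Dl_add)

lemma Dl_C: "isder d \<Longrightarrow> Dl d (fls_const c * h) = fls_const (d c) * h + fls_const c * Dl d h"
  unfolding Dl_def by (simp add: fmap_der_mult D_C algebra_simps)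

lemma Dl_Z: "isder d \<Longrightarrow> Dl d (Zs * h) = Zs * Dl d h"
  unfolding Dl_def by (simp add: D_Z algebra_simps)

lemma Dlpow_Z: "isder d \<Longrightarrow> (Dl d ^^ j) (Zs * h) = Zs * (Dl d ^^ j) h"
  by (induction j) (simp_all add: Dl_Z)

definition Sm :: "('r::comm_ring_1 \<Rightarrow> 'r) \<Rightarrow> 'r fls \<Rightarrow> int \<Rightarrow> 'r fls set" where
  "Sm d g m = {h. \<forall>j. ((Dl d ^^ j) h * g) $$ m = 0}"

lemma Sm_Dl: "h \<in> Sm d g m \<Longrightarrow> Dl d h \<in> Sm d g m"
proof -
  assume h: "h \<in> Sm d g m"
  have "(Dl d ^^ j) (Dl d h) = (Dl d ^^ Suc j) h" for j by (simp add: funpow_swap1)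
  then show ?thesis using h unfolding Sm_def
    by (simp del: funpow.simps)
qed

lemma Sm_add: "isder d \<Longrightarrow> a \<in> Sm d g m \<Longrightarrow> b \<in> Sm d g m \<Longrightarrow> a + b \<in> Sm d g m"
  unfolding Sm_def by (simp add: Dlpow_add distrib_right)

lemma Sm_C: assumes "isder d" shows "h \<in> Sm d g m \<Longrightarrow> fls_const c * h \<in> Sm d g m"
proof -
  have "\<forall>c h. h \<in> Sm d g m \<longrightarrow> ((Dl d ^^ j) (fls_const c * h) * g) $$ m = 0" for j
  proof (induction j)
    case 0
    show ?case by (auto simp: Sm_def mult.assoc dest: spec[of _ 0])
  next
    case (Suc j)
    show ?case
    proof (intro allI impI)
      fix c h assume h: "h \<in> Sm d g m"
      have "(Dl d ^^ Suc j) (fls_const c * h) = (Dl d ^^ j) (Dl d (fls_const c * h))"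
        by (simp add: funpow_swap1)
      also have "\<dots> = (Dl d ^^ j) (fls_const (d c) * h) + (Dl d ^^ j) (fls_const c * Dl d h)"
        by (simp add: Dl_C assms Dlpow_add)
      finally show "((Dl d ^^ Suc j) (fls_const c * h) * g) $$ m = 0"
        using Suc.IH h Sm_Dl[OF h] by (simp add: distrib_right)
    qed
  qed
  then show "h \<in> Sm d g m \<Longrightarrow> fls_const c * h \<in> Sm d g m"
    by (simp add: Sm_def)
qed


lemma D_add: "isder d \<Longrightarrow> fmap d (a + b) = fmap d a + fmap d b"
  by (rule fmap_add) (simp_all add: isder_add isder_zero)

lemma ZZ_eq:
  assumes d: "isder d"
    and Lf: "fmap d (fmap d f) + 2 * (Zs * fmap d f) + fls_const (2 * U) * f = 0"
  shows "Zs * (Zs * f) = Dl d (Dl d f) + fls_const (2 * U) * f"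
proof -
  have "Dl d (Dl d f) = fmap d (fmap d f) + 2 * (Zs * fmap d f) + Zs * (Zs * f)"
    unfolding Dl_def by (simp add: D_add[OF d] D_Z[OF d] algebra_simps)
  with Lf show ?thesis by (simp add: algebra_simps eq_neg_iff_add_eq_0)
qed

lemma Sm_step:
  assumes d: "isder d"
    and Lf: "fmap d (fmap d f) + 2 * (Zs * fmap d f) + fls_const (2 * U) * f = 0"
    and f: "f \<in> Sm d g m"
  shows "f \<in> Sm d g (m + 2)"
  unfolding Sm_def
proof (intro CollectI allI)
  fix j
  have "((Dl d ^^ j) f * g) $$ (m + 2) = (Zs * (Zs * ((Dl d ^^ j) f * g))) $$ m"
    by (simp add: Z_nth add.assoc)
  also have "Zs * (Zs * ((Dl d ^^ j) f * g)) = (Dl d ^^ j) (Zs * (Zs * f)) * g"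
    by (simp add: Dlpow_Z[OF d] mult.assoc)
  also have "\<dots> = (Dl d ^^ j) (Dl d (Dl d f)) * g + (Dl d ^^ j) (fls_const (2 * U) * f) * g"
    by (simp add: ZZ_eq[OF d Lf] Dlpow_add[OF d] distrib_right)
  finally show "((Dl d ^^ j) f * g) $$ (m + 2) = 0"
    using Sm_Dl[OF Sm_Dl[OF f]] Sm_C[OF d f, of "2 * U"] unfolding Sm_def by simp
qed

lemma Sm_odd:
  assumes d: "isder d"
    and Lf: "fmap d (fmap d f) + 2 * (Zs * fmap d f) + fls_const (2 * U) * f = 0"
    and f: "f \<in> Sm d g 1"
  shows "f \<in> Sm d g (2 * int k + 1)"
proof (induction k)
  case 0 then show ?case using f by simp
next
  case (Suc k)
  have "2 * int (Suc k) + 1 = (2 * int k + 1) + 2" by simp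
  then show ?case using Sm_step[OF d Lf Suc] by simp
qed


definition ev :: "'r::comm_ring_1 fls \<Rightarrow> bool" where
  "ev x \<longleftrightarrow> (\<forall>k. odd k \<longrightarrow> x $$ k = 0)"

lemma ev_add: "ev x \<Longrightarrow> ev y \<Longrightarrow> ev (x + y)" by (simp add: ev_def)
lemma ev_diff: "ev x \<Longrightarrow> ev y \<Longrightarrow> ev (x - y)" by (simp add: ev_def)
lemma ev_uminus: "ev x \<Longrightarrow> ev (- x)" by (simp add: ev_def)
lemma ev_C: "ev (fls_const c)" unfolding ev_def by auto
lemma ev_numeral: "ev (numeral n)" by (metis ev_C fls_const_numeral)
lemma ev_mult: assumes "ev x" "ev y" shows "ev (x * y)"
  unfolding ev_def
proof (intro allI impI)
  fix k :: int assume k: "odd k"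
  have "(x * y) $$ k = (\<Sum>i=fls_subdegree x..k - fls_subdegree y. x $$ i * y $$ (k - i))"
    by (rule fls_times_nth(2))
  also have "\<dots> = 0"
  proof (rule sum.neutral, intro ballI)
    fix i assume "i \<in> {fls_subdegree x..k - fls_subdegree y}"
    show "x $$ i * y $$ (k - i) = 0"
    proof (cases "odd i")
      case True then show ?thesis using assms(1) by (simp add: ev_def)
    next
      case False then have "odd (k - i)" using k by simp
      then show ?thesis using assms(2) by (simp add: ev_def)
    qed
  qed
  finally show "(x * y) $$ k = 0" .
qed
lemma ev_D: "isder d \<Longrightarrow> ev x \<Longrightarrow> ev (fmap d x)" by (simp add: ev_def isder_zero)
lemma ev_ZZ: "ev x \<Longrightarrow> ev (Zs * (Zs * x))"
  by (simp add: ev_def Z_nth add.assoc)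

lemma lb0_mult_neg:
  fixes x y :: "'r::comm_ring_1 fls"
  assumes "\<forall>k<0. x $$ k = 0" "\<forall>k<0. y $$ k = 0" "k < 0"
  shows "(x * y) $$ k = 0"
  using assms by (subst fls_times_nth_lb[where a=0 and b=0]) auto

lemma lb0_mult_0:
  fixes x y :: "'r::comm_ring_1 fls"
  assumes "\<forall>k<0. x $$ k = 0" "\<forall>k<0. y $$ k = 0"
  shows "(x * y) $$ 0 = x $$ 0 * y $$ 0"
  using assms by (subst fls_times_nth_lb[where a=0 and b=0]) auto

lemma wronski:
  fixes f g :: "'r::comm_ring_1 fls"
  assumes d: "isder d" and H: "2 * H = (1::'r)"
    and f0: "f $$ 0 = 1" and fneg: "\<forall>k<0. f $$ k = 0"
    and g0: "g $$ 0 = 1" and gneg: "\<forall>k<0. g $$ k = 0"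
    and Lf: "fmap d (fmap d f) + 2 * (Zs * fmap d f) + fls_const (2 * U) * f = 0"
    and Lg: "fmap d (fmap d g) - 2 * (Zs * fmap d g) + fls_const (2 * U) * g = 0"
    and dual: "f \<in> Sm d g 1"
  shows "f * fmap d g - fmap d f * g - 2 * (Zs * (f * g)) = - (2 * Zs)"
    and "ev (f * g)"
proof -
  define R where "R = f * g"
  define a1 where "a1 = fmap d f"
  define b1 where "b1 = fmap d g"
  define c where "c = fls_const (2 * U)"
  have Rneg: "\<forall>k<0. R $$ k = 0" unfolding R_def using lb0_mult_neg fneg gneg by blast
  have R0: "R $$ 0 = 1" unfolding R_def using lb0_mult_0[OF fneg gneg] f0 g0 by simp
  have a1neg: "\<forall>k<0. a1 $$ k = 0" unfolding a1_def using fneg d by (simp add: isder_zero)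
  have oddpos: "((Dl d ^^ j) f * g) $$ k = 0" if ko: "odd k" and kp: "k > 0" for j k
  proof -
    obtain k' where "k = 2 * int k' + 1" using that
    proof -
      have "k = 2 * (k div 2) + 1" using ko by simp
      moreover have "k div 2 \<ge> 0" using kp by simp
      ultimately show ?thesis using that[of "nat (k div 2)"] by simp
    qed
    then show ?thesis using Sm_odd[OF d Lf dual, of k'] unfolding Sm_def by simp
  qed
  show evR: "ev (f * g)"
    unfolding ev_def
  proof (intro allI impI)
    fix k :: int assume k: "odd k"
    show "(f * g) $$ k = 0"
    proof (cases "k < 0")
      case True then show ?thesis using Rneg R_def by simp
    next
      case False then have "k > 0" using k by (cases "k = 0") auto
      then show ?thesis using oddpos[OF k, of 0] by simp
    qed
  qed
  define E where "E = f * b1 - a1 * g - 2 * (Zs * R) + 2 * Zs"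
  have DR: "fmap d R = a1 * g + f * b1"
    unfolding R_def a1_def b1_def by (rule fmap_der_mult[OF d])
  have E_alt: "E = fmap d R - 2 * (a1 * g + Zs * R) + 2 * Zs"
    unfolding E_def DR by (simp add: algebra_simps)
  have evE: "ev E"
    unfolding ev_def
  proof (intro allI impI)
    fix k :: int assume k: "odd k"
    have DRk: "fmap d R $$ k = 0" using evR k d by (simp add: R_def ev_def isder_zero)
    have A1k: "(a1 * g + Zs * R) $$ k = (if k = -1 then 1 else 0)"
    proof (cases "k > 0")
      case True
      have "(Dl d f * g) $$ k = 0" using oddpos[OF k True, of 1] by simp
      then show ?thesis using True unfolding Dl_def a1_def R_def by (simp add: algebra_simps)
    next
      case False
      then have "k < 0" using k by (cases "k = 0") auto
      then have "(a1 * g) $$ k = 0" using lb0_mult_neg a1neg gneg by blast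
      then show ?thesis using Rneg R0 \<open>k < 0\<close> by (simp add: Z_nth)
    qed
    have "E $$ k = fmap d R $$ k - 2 * ((a1 * g + Zs * R) $$ k) + 2 * (Zs $$ k)"
      unfolding E_alt by (simp only: fls_plus_nth fls_minus_nth fls_mult_of_numeral_nth)
    also have "\<dots> = 0" unfolding A1k DRk by simp
    finally show "E $$ k = 0" .
  qed
  have DDf: "fmap d a1 = - 2 * (Zs * a1) - c * f" using Lf unfolding a1_def c_def
    by (simp add: algebra_simps eq_neg_iff_add_eq_0)
  have DDg: "fmap d b1 = 2 * (Zs * b1) - c * g" using Lg unfolding b1_def c_def
    by (simp add: algebra_simps eq_neg_iff_add_eq_0)
  have DDR: "fmap d (fmap d R) = fmap d a1 * g + 2 * (a1 * b1) + f * fmap d b1"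
    unfolding DR by (simp add: D_add[OF d] fmap_der_mult[OF d] a1_def b1_def algebra_simps)
  define W where "W = f * b1 - a1 * g - 2 * (Zs * R)"
  have ident0: "2 * R * ((- 2 * (Zs * a1) - c * f) * g + 2 * (a1 * b1) + f * (2 * (Zs * b1) - c * g))
      - (a1 * g + f * b1) * (a1 * g + f * b1) - 4 * (Zs * (Zs * (R * R))) + 4 * c * (R * R)
      = - (W * W)"
    unfolding W_def R_def by (simp add: algebra_simps)
  have ident: "2 * R * fmap d (fmap d R) - fmap d R * fmap d R - 4 * (Zs * (Zs * (R * R))) + 4 * c * (R * R)
      = - (W * W)"
    unfolding DDR unfolding DDf DDg DR by (rule ident0)
  have evL: "ev (2 * R * fmap d (fmap d R) - fmap d R * fmap d R - 4 * (Zs * (Zs * (R * R))) + 4 * c * (R * R))"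
    using evR unfolding R_def[symmetric] c_def
    by (intro ev_add ev_diff ev_mult ev_D[OF d] ev_ZZ ev_numeral ev_C; simp)+
  have WE: "W = E - 2 * Zs" unfolding W_def E_def by simp
  have "4 * (Zs * E) = E * E + 4 * (Zs * (Zs * 1)) + - (W * W)" unfolding WE by (simp add: algebra_simps)
  also have "\<dots> = E * E + 4 * (Zs * (Zs * 1)) + (2 * R * fmap d (fmap d R) - fmap d R * fmap d R - 4 * (Zs * (Zs * (R * R))) + 4 * c * (R * R))"
    unfolding ident ..
  finally have ev4: "ev (4 * (Zs * E))"
    using ev_add[OF ev_add[OF ev_mult[OF evE evE] ev_mult[OF ev_numeral ev_ZZ[OF ev_C[of 1, unfolded fls_const_1]]]] evL]
    by simp
  have "E $$ n = 0" for n
  proof (cases "odd n")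
    case True then show ?thesis using evE by (simp add: ev_def)
  next
    case False
    then have "odd (n - 1)" by simp
    then have "(4 * (Zs * E)) $$ (n - 1) = 0" using ev4 by (simp add: ev_def)
    then have "4 * E $$ n = 0" by (simp add: Z_nth)
    then have "(H * H) * (4 * E $$ n) = 0" by simp
    moreover have "(H * H) * 4 = 1"
    proof -
      have "(2 * H) * (2 * H) = (H * H) * 4" by (simp add: mult_ac)
      then show ?thesis using H by simp
    qed
    ultimately show ?thesis by (metis mult.assoc mult_1)
  qed
  then have "E = 0" by (simp add: fls_eq_iff)
  then show "f * fmap d g - fmap d f * g - 2 * (Zs * (f * g)) = - (2 * Zs)"
    unfolding E_def a1_def b1_def R_def by (simp add: eq_neg_iff_add_eq_0)
qed


definition sq2 :: "'r::comm_ring_1 fls \<Rightarrow> 'r fls" where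
  "sq2 x = Abs_fls (\<lambda>k. if even k then x $$ (k div 2) else 0)"

lemma sq2_nth: "sq2 x $$ k = (if even k then x $$ (k div 2) else 0)"
  unfolding sq2_def
  by (rule nth_Abs_fls_lower_bound[where N="2 * fls_subdegree x"]) auto

lemma sq2_add: "sq2 (x + y) = sq2 x + sq2 y" by (rule fls_eqI) (simp add: sq2_nth)
lemma sq2_diff: "sq2 (x - y) = sq2 x - sq2 y" by (rule fls_eqI) (simp add: sq2_nth)
lemma sq2_uminus: "sq2 (- x) = - sq2 x" by (rule fls_eqI) (simp add: sq2_nth)
lemma sq2_C: "sq2 (fls_const c) = fls_const c" by (rule fls_eqI) (auto simp: sq2_nth)
lemma sq2_numeral: "sq2 (numeral n) = numeral n" by (metis sq2_C fls_const_numeral)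
lemma sq2_Z: "sq2 Zs = Zs * Zs"
  by (rule fls_eqI) (auto simp: sq2_nth Z_nth; presburger)
lemma sq2_D: "isder d \<Longrightarrow> sq2 (fmap d x) = fmap d (sq2 x)"
  by (rule fls_eqI) (simp add: sq2_nth isder_zero)
lemma sq2_inj: "sq2 x = sq2 y \<Longrightarrow> x = y"
proof (rule fls_eqI)
  fix n assume "sq2 x = sq2 y"
  then have "sq2 x $$ (2 * n) = sq2 y $$ (2 * n)" by simp
  then show "x $$ n = y $$ n" by (simp add: sq2_nth)
qed

lemma sq2_mult: "sq2 (x * y) = sq2 x * sq2 y"
proof (rule fls_eqI)
  fix n
  define a where "a = fls_subdegree x"
  define b where "b = fls_subdegree y"
  have "(sq2 x * sq2 y) $$ n = (\<Sum>i=2*a..n-2*b. sq2 x $$ i * sq2 y $$ (n - i))"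
    by (rule fls_times_nth_lb) (auto simp: sq2_nth a_def b_def)
  also have "\<dots> = (\<Sum>i\<in>(\<lambda>j. 2 * j) ` {a..n div 2 - b}. sq2 x $$ i * sq2 y $$ (n - i))"
    if "even n"
  proof (rule sum.mono_neutral_right)
    show "(\<lambda>j. 2 * j) ` {a..n div 2 - b} \<subseteq> {2 * a..n - 2 * b}" using that by auto
    show "\<forall>i\<in>{2 * a..n - 2 * b} - (\<lambda>j. 2 * j) ` {a..n div 2 - b}. sq2 x $$ i * sq2 y $$ (n - i) = 0"
    proof
      fix i assume i: "i \<in> {2 * a..n - 2 * b} - (\<lambda>j. 2 * j) ` {a..n div 2 - b}"
      have "odd i"
      proof
        assume "even i"
        then have "i = 2 * (i div 2)" by simp
        moreover have "i div 2 \<in> {a..n div 2 - b}" using i that by auto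
        ultimately show False using i by blast
      qed
      then show "sq2 x $$ i * sq2 y $$ (n - i) = 0" by (simp add: sq2_nth)
    qed
  qed simp
  also have "\<dots> = (\<Sum>j=a..n div 2 - b. x $$ j * y $$ (n div 2 - j))" if "even n"
    using that by (subst sum.reindex) (auto simp: inj_on_def sq2_nth intro!: sum.cong)
  also have "\<dots> = (x * y) $$ (n div 2)"
    by (simp add: fls_times_nth(2) a_def b_def)
  finally have ev: "even n \<Longrightarrow> (sq2 x * sq2 y) $$ n = sq2 (x * y) $$ n"
    by (simp add: sq2_nth)
  have od: "odd n \<Longrightarrow> (sq2 x * sq2 y) $$ n = 0"
    by (subst fls_times_nth(2)) (auto intro!: sum.neutral simp: sq2_nth)
  show "sq2 (x * y) $$ n = (sq2 x * sq2 y) $$ n"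
    using ev od by (cases "even n") (auto simp: sq2_nth)
qed

definition half :: "'r::comm_ring_1 fls \<Rightarrow> 'r fls" where
  "half x = Abs_fls (\<lambda>k. x $$ (2 * k))"

lemma half_nth: "half x $$ k = x $$ (2 * k)"
  unfolding half_def
  by (rule nth_Abs_fls_lower_bound[where N="min (fls_subdegree x) 0"]) auto

lemma sq2_half: "ev x \<Longrightarrow> sq2 (half x) = x"
  by (rule fls_eqI) (auto simp: sq2_nth half_nth ev_def)


definition Beq :: "('r::comm_ring_1 \<Rightarrow> 'r) \<Rightarrow> 'r \<Rightarrow> 'r \<Rightarrow> 'r fls \<Rightarrow> bool" where
  "Beq d H U B \<longleftrightarrow> B * fmap d (fmap d B) - fls_const H * (fmap d B * fmap d B)
      - 2 * ((Zs - fls_const (2 * U)) * (B * B)) = - (2 * Zs)"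

lemma half_ident:
  fixes X Y P Q T h :: "'r::comm_ring_1"
  assumes h: "2 * h = 1" and e: "2 * X - Y - 4 * P + 4 * Q = - (4 * T)"
  shows "X - h * Y - 2 * P + 2 * Q = - (2 * T)"
proof -
  have "X - h * Y - 2 * P + 2 * Q + 2 * T = (2 * h) * X - h * Y - 2 * (2 * h) * P + 2 * (2 * h) * Q + 2 * (2 * h) * T"
    using h by simp
  also have "\<dots> = h * (2 * X - Y - 4 * P + 4 * Q + 4 * T)" by (simp add: algebra_simps)
  also have "\<dots> = 0" using e by (simp add: eq_neg_iff_add_eq_0)
  finally show ?thesis by (simp add: eq_neg_iff_add_eq_0)
qed

lemma half_Beq:
  fixes R :: "'r::comm_ring_1 fls"
  assumes d: "isder d" and H: "2 * H = 1" and evR: "ev R"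
    and ident: "2 * R * fmap d (fmap d R) - fmap d R * fmap d R - 4 * (Zs * (Zs * (R * R)))
        + 4 * fls_const (2 * U) * (R * R) = - (4 * (Zs * Zs))"
  shows "Beq d H U (half R)"
  unfolding Beq_def
proof (rule sq2_inj)
  have h: "2 * fls_const H = (1 :: 'r fls)"
    by (metis H fls_const_1 fls_const_mult_const fls_const_numeral)
  have "R * fmap d (fmap d R) - fls_const H * (fmap d R * fmap d R) - 2 * (Zs * (Zs * (R * R)))
      + 2 * (fls_const (2 * U) * (R * R)) = - (2 * (Zs * Zs))"
    using half_ident[OF h, of "R * fmap d (fmap d R)" "fmap d R * fmap d R" "Zs * (Zs * (R * R))"
        "fls_const (2 * U) * (R * R)" "Zs * Zs"] ident
    by (simp add: mult.assoc)
  moreover have "2 * ((Zs * Zs - fls_const (2 * U)) * (R * R)) =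
      2 * (Zs * (Zs * (R * R))) - 2 * (fls_const (2 * U) * (R * R))"
    by (simp only: mult.assoc right_diff_distrib left_diff_distrib)
  ultimately have "R * fmap d (fmap d R) - fls_const H * (fmap d R * fmap d R) -
      2 * ((Zs * Zs - fls_const (2 * U)) * (R * R)) = - (2 * (Zs * Zs))"
    by (simp add: diff_diff_eq2 diff_add_eq)
  then show "sq2 (half R * fmap d (fmap d (half R)) - fls_const H * (fmap d (half R) * fmap d (half R)) -
      2 * ((Zs - fls_const (2 * U)) * (half R * half R))) = sq2 (- (2 * Zs))"
    by (simp only: sq2_mult sq2_diff sq2_add sq2_uminus sq2_D[OF d] sq2_C sq2_numeral sq2_Z
        sq2_half[OF evR])
qed

lemma prod_nat:
  fixes x y :: "'r::comm_ring_1 fls"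
  assumes "\<forall>k<0. x $$ k = 0" "\<forall>k<0. y $$ k = 0"
  shows "(x * y) $$ int k = (\<Sum>i\<le>k. x $$ int i * y $$ int (k - i))"
proof -
  have "(x * y) $$ int k = (\<Sum>i=0..int k. x $$ i * y $$ (int k - i))"
    using assms by (subst fls_times_nth_lb[where a=0 and b=0]) auto
  also have "\<dots> = (\<Sum>i\<le>k. x $$ int i * y $$ int (k - i))"
  proof (rule sum.reindex_cong[where l=int])
    show "inj_on int {..k}" by simp
    show "{0..int k} = int ` {..k}"
    proof
      show "int ` {..k} \<subseteq> {0..int k}" by auto
      show "{0..int k} \<subseteq> int ` {..k}"
      proof
        fix i assume "i \<in> {0..int k}"
        then have "i = int (nat i)" "nat i \<in> {..k}" by auto
        then show "i \<in> int ` {..k}" by (rule rev_image_eqI[rotated])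
      qed
    qed
  qed (simp add: of_nat_diff)
  finally show ?thesis .
qed

lemma rec_alg: "p - h*q - 2*((2*x + s) - 2*u*r) = 0 \<Longrightarrow> 4*x = p - h*q + 4*u*r - 2*s"
  for p h q x s u r :: "'r::comm_ring_1"
proof -
  assume a: "p - h*q - 2*((2*x + s) - 2*u*r) = 0"
  have "p - h*q + 4*u*r - 2*s - 4*x = p - h*q - 2*((2*x + s) - 2*u*r)" by (simp add: algebra_simps)
  then show ?thesis using a by simp
qed

definition Phi :: "('r::comm_ring_1 \<Rightarrow> 'r) \<Rightarrow> 'r \<Rightarrow> 'r \<Rightarrow> nat \<Rightarrow> (nat \<Rightarrow> 'r) \<Rightarrow> 'r" where
  "Phi d H U k b = (\<Sum>i\<le>k. b i * d (d (b (k - i)))) - H * (\<Sum>i\<le>k. d (b i) * d (b (k - i)))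
     + 4 * U * (\<Sum>i\<le>k. b i * b (k - i)) - 2 * (\<Sum>i\<in>{1..k}. b i * b (Suc k - i))"

lemma Beq_rec:
  fixes B :: "'r::comm_ring_1 fls"
  assumes d: "isder d" and eq: "Beq d H U B" and B0: "B $$ 0 = 1" and Bneg: "\<forall>k<0. B $$ k = 0"
  shows "4 * B $$ int (Suc k) = Phi d H U k (\<lambda>j. B $$ int j)"
proof -
  define b where "b = (\<lambda>j. B $$ int j)"
  have DBneg: "\<forall>k<0. fmap d B $$ k = 0" using Bneg d by (simp add: isder_zero)
  have DDBneg: "\<forall>k<0. fmap d (fmap d B) $$ k = 0" using Bneg d by (simp add: isder_zero)
  have P1: "(B * fmap d (fmap d B)) $$ int k = (\<Sum>i\<le>k. b i * d (d (b (k - i))))"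
    using prod_nat[OF Bneg DDBneg] d by (simp add: b_def isder_zero)
  have P2: "(fmap d B * fmap d B) $$ int k = (\<Sum>i\<le>k. d (b i) * d (b (k - i)))"
    using prod_nat[OF DBneg DBneg] d by (simp add: b_def isder_zero)
  have Q: "(B * B) $$ int k = (\<Sum>i\<le>k. b i * b (k - i))"
    using prod_nat[OF Bneg Bneg] by (simp add: b_def)
  have "(B * B) $$ int (Suc k) = (\<Sum>i\<le>Suc k. b i * b (Suc k - i))"
    unfolding b_def by (rule prod_nat[OF Bneg Bneg])
  also have "{..Suc k} = insert 0 (insert (Suc k) {1..k})" by auto
  also have "(\<Sum>i\<in>insert 0 (insert (Suc k) {1..k}). b i * b (Suc k - i))
      = b 0 * b (Suc k) + (b (Suc k) * b 0 + (\<Sum>i\<in>{1..k}. b i * b (Suc k - i)))"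
    by (simp add: sum.insert)
  finally have Q1': "(B * B) $$ int (Suc k) = 2 * b (Suc k) + (\<Sum>i\<in>{1..k}. b i * b (Suc k - i))"
    using B0 by (simp add: b_def del: of_nat_Suc)
  have Q1: "(B * B) $$ (int k + 1) = 2 * b (Suc k) + (\<Sum>i\<in>{1..k}. b i * b (Suc k - i))"
    using Q1' by (metis of_nat_Suc add.commute)
  have "(B * fmap d (fmap d B) - fls_const H * (fmap d B * fmap d B)
      - 2 * ((Zs - fls_const (2 * U)) * (B * B))) $$ int k = (- (2 * Zs)) $$ int k"
    using eq unfolding Beq_def by simp
  then have "(B * fmap d (fmap d B)) $$ int k - H * (fmap d B * fmap d B) $$ int k
      - 2 * ((B * B) $$ (int k + 1) - 2 * U * (B * B) $$ int k) = 0"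
    by (simp add: left_diff_distrib Z_nth mult.assoc del: fls_const_mult_const)
  then show ?thesis unfolding P1 P2 Q Q1 Phi_def b_def[symmetric]
    using rec_alg by (simp add: b_def)
qed


lemma Phi_cong: "(\<And>j. j \<le> k \<Longrightarrow> b1 j = b2 j) \<Longrightarrow> Phi d H U k b1 = Phi d H U k b2"
proof -
  assume h: "\<And>j. j \<le> k \<Longrightarrow> b1 j = b2 j"
  have 1: "(\<Sum>i\<le>k. b1 i * d (d (b1 (k - i)))) = (\<Sum>i\<le>k. b2 i * d (d (b2 (k - i))))"
    by (rule sum.cong) (simp_all add: h)
  have 2: "(\<Sum>i\<le>k. d (b1 i) * d (b1 (k - i))) = (\<Sum>i\<le>k. d (b2 i) * d (b2 (k - i)))"
    by (rule sum.cong) (simp_all add: h)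
  have 3: "(\<Sum>i\<le>k. b1 i * b1 (k - i)) = (\<Sum>i\<le>k. b2 i * b2 (k - i))"
    by (rule sum.cong) (simp_all add: h)
  have h': "\<And>i. 1 \<le> i \<Longrightarrow> b1 (Suc k - i) = b2 (Suc k - i)" using h by simp
  have 4: "(\<Sum>i\<in>{1..k}. b1 i * b1 (Suc k - i)) = (\<Sum>i\<in>{1..k}. b2 i * b2 (Suc k - i))"
    by (rule sum.cong) (simp_all add: h h')
  show ?thesis unfolding Phi_def 1 2 3 4 ..
qed

lemma four_cancel: "2 * H = (1::'r) \<Longrightarrow> 4 * x = 4 * y \<Longrightarrow> x = y"
  for x y H :: "'r::comm_ring_1"
proof -
  assume H: "2 * H = 1" and e: "4 * x = 4 * y"
  have "(2 * H) * (2 * H) = (H * H) * 4" by (simp add: mult_ac)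
  then have h4: "(H * H) * 4 = 1" using H by simp
  have "x = ((H * H) * 4) * x" using h4 by simp
  also have "\<dots> = (H * H) * (4 * x)" by (simp add: mult_ac)
  also have "\<dots> = ((H * H) * 4) * y" using e by (simp add: mult_ac)
  finally show "x = y" using h4 by simp
qed

lemma Beq_unique:
  fixes B1 B2 :: "'r::comm_ring_1 fls"
  assumes d: "isder d" and H: "2 * H = 1"
    and e1: "Beq d H U B1" and n1: "B1 $$ 0 = 1" "\<forall>k<0. B1 $$ k = 0"
    and e2: "Beq d H U B2" and n2: "B2 $$ 0 = 1" "\<forall>k<0. B2 $$ k = 0"
  shows "B1 = B2"
proof -
  have "\<forall>j\<le>n. B1 $$ int j = B2 $$ int j" for n
  proof (induction n)
    case 0 then show ?case using n1 n2 by simp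
  next
    case (Suc n)
    have "4 * B1 $$ int (Suc n) = 4 * B2 $$ int (Suc n)"
      unfolding Beq_rec[OF d e1 n1] Beq_rec[OF d e2 n2] using Suc.IH by (intro Phi_cong) simp
    then have "B1 $$ int (Suc n) = B2 $$ int (Suc n)" by (rule four_cancel[OF H])
    then show ?case using Suc.IH le_Suc_eq by auto
  qed
  then have nn: "B1 $$ int j = B2 $$ int j" for j by blast
  show ?thesis
  proof (rule fls_eqI)
    fix k :: int show "B1 $$ k = B2 $$ k"
    proof (cases "k < 0")
      case True then show ?thesis using n1 n2 by simp
    next
      case False then show ?thesis using nn[of "nat k"] by simp
    qed
  qed
qed

lemma P_sum: "P 0 \<Longrightarrow> (\<And>x y. P x \<Longrightarrow> P y \<Longrightarrow> P (x + y)) \<Longrightarrow> (\<And>i. i \<in> S \<Longrightarrow> P (f i)) \<Longrightarrow> P (sum f S)"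
  by (induction S rule: infinite_finite_induct) auto

lemma Beq_P:
  fixes B :: "'r::comm_ring_1 fls"
  assumes d: "isder d" and H: "2 * H = 1"
    and e: "Beq d H U B" and n: "B $$ 0 = 1" "\<forall>k<0. B $$ k = 0"
    and P0: "P 0" and P1: "P 1" and PH: "P H" and PU: "P U"
    and Padd: "\<And>x y. P x \<Longrightarrow> P y \<Longrightarrow> P (x + y)"
    and Pmult: "\<And>x y. P x \<Longrightarrow> P y \<Longrightarrow> P (x * y)"
    and Pneg: "\<And>x. P x \<Longrightarrow> P (- x)"
    and Pd: "\<And>x. P x \<Longrightarrow> P (d x)"
  shows "P (B $$ k)"
proof -
  have Pdiff: "P (x - y)" if "P x" "P y" for x y using Padd[OF that(1) Pneg[OF that(2)]] by simp
  have Pnat: "P (of_nat m)" for m by (induction m) (simp_all add: P0 P1 Padd)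
  have Pnum: "P (numeral m)" for m using Pnat[of "numeral m"] by simp
  have Psum: "P (sum f S)" if "\<And>i. i \<in> S \<Longrightarrow> P (f i)" for f and S :: "nat set"
    using that by (induction S rule: infinite_finite_induct) (auto simp: P0 Padd)
  have "\<forall>j\<le>m. P (B $$ int j)" for m
  proof (induction m)
    case 0 then show ?case using n P1 by simp
  next
    case (Suc m)
    have b: "\<And>j. j \<le> m \<Longrightarrow> P (B $$ int j)" using Suc.IH by simp
    have "P (Phi d H U m (\<lambda>j. B $$ int j))"
    proof -
      have s1: "P (\<Sum>i\<le>m. B $$ int i * d (d (B $$ int (m - i))))"
      proof (rule Psum)
        fix i assume "i \<in> {..m}"
        then show "P (B $$ int i * d (d (B $$ int (m - i))))"
          using Pmult[OF b[of i] Pd[OF Pd[OF b[of "m - i"]]]] by simp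
      qed
      have s2: "P (\<Sum>i\<le>m. d (B $$ int i) * d (B $$ int (m - i)))"
      proof (rule Psum)
        fix i assume "i \<in> {..m}"
        then show "P (d (B $$ int i) * d (B $$ int (m - i)))"
          using Pmult[OF Pd[OF b[of i]] Pd[OF b[of "m - i"]]] by simp
      qed
      have s3: "P (\<Sum>i\<le>m. B $$ int i * B $$ int (m - i))"
      proof (rule Psum)
        fix i assume "i \<in> {..m}"
        then show "P (B $$ int i * B $$ int (m - i))"
          using Pmult[OF b[of i] b[of "m - i"]] by simp
      qed
      have s4: "P (\<Sum>i\<in>{1..m}. B $$ int i * B $$ int (Suc m - i))"
      proof (rule Psum)
        fix i assume i: "i \<in> {1..m}"
        then have "Suc m - i \<le> m" "i \<le> m" by auto
        then show "P (B $$ int i * B $$ int (Suc m - i))"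
          using Pmult[OF b[of i] b[of "Suc m - i"]] by blast
      qed
      show ?thesis unfolding Phi_def
        by (rule Pdiff[OF Padd[OF Pdiff[OF s1 Pmult[OF PH s2]] Pmult[OF Pmult[OF Pnum PU] s3]] Pmult[OF Pnum s4]])
    qed
    then have "P ((H * H) * (4 * B $$ int (Suc m)))"
      unfolding Beq_rec[OF d e n] by (intro Pmult PH)
    moreover have "(H * H) * (4 * B $$ int (Suc m)) = B $$ int (Suc m)"
    proof -
      have "(2 * H) * (2 * H) = (H * H) * 4" by (simp add: mult_ac)
      then have h4: "(H * H) * 4 = 1" using H by simp
      then show ?thesis by (metis mult.assoc mult_1)
    qed
    ultimately have "P (B $$ int (Suc m))" by simp
    then show ?case using Suc.IH le_Suc_eq by auto
  qed
  then have nn: "P (B $$ int j)" for j by blast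
  show ?thesis
  proof (cases "k < 0")
    case True then show ?thesis using n P0 by simp
  next
    case False then show ?thesis using nn[of "nat k"] by simp
  qed
qed


lemma fls_sum_nth: "(sum f S) $$ k = (\<Sum>x\<in>S. f x $$ k)"
  by (induction S rule: infinite_finite_induct) auto

lemma tsf_eq_zero: "tsf a = ser_zero \<longleftrightarrow> a = 0"
  by (metis TS_tsf TS_zero tsf_zero)

definition repL :: "'a::comm_ring_1 lser \<Rightarrow> 'a ts fls \<Rightarrow> bool" where
  "repL F x \<longleftrightarrow> F = (\<lambda>i. tsf (x $$ (- i)))"

lemma repL_nth: "repL F x \<Longrightarrow> x $$ k = TS (F (- k))"
  by (simp add: repL_def)

lemma repL_unique: "repL F x \<Longrightarrow> repL F y \<Longrightarrow> x = y"
  by (rule fls_eqI) (simp add: repL_nth)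

lemma repL_eq: "repL F x \<Longrightarrow> repL G x \<Longrightarrow> F = G"
  by (simp add: repL_def)

lemma repL_ex: "repL (\<lambda>i. tsf (x $$ (- i))) x"
  by (simp add: repL_def)

lemma repL_ladd: "repL F x \<Longrightarrow> repL G y \<Longrightarrow> repL (ladd F G) (x + y)"
  by (simp add: repL_def ladd_def ser_add_def fun_eq_iff)

lemma repL_lsub: "repL F x \<Longrightarrow> repL G y \<Longrightarrow> repL (lsub F G) (x - y)"
  by (simp add: repL_def lsub_def ser_sub_def fun_eq_iff)

lemma repL_lscale: "repL F x \<Longrightarrow> repL (lscale c F) (fls_const (tsc c) * x)"
  unfolding repL_def by clarify (simp add: lscale_def ser_scale_eq fun_eq_iff)

lemma repL_lconst: "repL (lconst f) (fls_const (TS f))"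
  by (auto simp: repL_def lconst_def fun_eq_iff ser_zero_def)

lemma repL_lvar: "repL lvar Zs"
  by (auto simp: repL_def lvar_def fun_eq_iff ser_zero_def)

lemma repL_ldx: "isder dx \<Longrightarrow> repL F x \<Longrightarrow> repL (ldx dx F) (fmap (tD dx) x)"
  by (simp add: repL_def ldx_def ser_dt0_eq fun_eq_iff isder_zero tD_isder)

lemma repL_shiftd:
  "isder dx \<Longrightarrow> repL F x \<Longrightarrow> repL (shiftd dx s F) (fmap (tD dx) x + fls_const (tsc s) * (Zs * x))"
  unfolding repL_def by clarify (simp add: shiftd_def ser_dt0_eq ser_scale_eq ser_add_def fun_eq_iff
    isder_zero tD_isder Z_nth)

lemma repL_shift2: "repL F x \<Longrightarrow> repL (\<lambda>i. F (i - 2)) (Zs * (Zs * x))"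
  by (simp add: repL_def Z_nth fun_eq_iff algebra_simps)

definition wL :: "(nat \<Rightarrow> 'a::comm_ring_1 ser) \<Rightarrow> 'a ts fls" where
  "wL phi = Abs_fls (\<lambda>k. if k = 0 then 1 else if k > 0 then TS (phi (nat k)) else 0)"

lemma wL_nth: "wL phi $$ k = (if k = 0 then 1 else if k > 0 then TS (phi (nat k)) else 0)"
  unfolding wL_def by (rule nth_Abs_fls_lower_bound[where N=0]) auto

lemma repL_wser: "repL (wser phi) (wL phi)"
  by (auto simp: repL_def wser_def wL_nth fun_eq_iff)

lemma neg_div2: "even k \<Longrightarrow> - k div 2 = - (k div 2)" for k :: int
  by presburger

lemma repL_lsq: "repL F x \<Longrightarrow> repL (lsq F) (sq2 x)"
  unfolding repL_def by clarify (auto simp: lsq_def sq2_nth fun_eq_iff ser_zero_def neg_div2)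

lemma repL_lmult:
  assumes F: "repL F x" and G: "repL G y"
  shows "repL (lmult F G) (x * y)"
  unfolding repL_def
proof (rule ext, rule ext)
  fix i M
  define a where "a = fls_subdegree x"
  define b where "b = fls_subdegree y"
  define t where "t = (\<lambda>j. ser_mult (F j) (G (i - j)) M)"
  have Fj: "F j = tsf (x $$ (- j))" for j using F by (simp add: repL_def)
  have Gj: "G j = tsf (y $$ (- j))" for j using G by (simp add: repL_def)
  have t_eq: "t j = tsf (x $$ (- j) * y $$ (j - i)) M" for j
    by (simp add: t_def Fj Gj tsf_mult)
  have "tsf ((x * y) $$ (- i)) M = tsf (\<Sum>k=a..- i - b. x $$ k * y $$ (- i - k)) M"
    by (simp add: fls_times_nth(2) a_def b_def)
  also have "\<dots> = (\<Sum>k=a..- i - b. tsf (x $$ k * y $$ (- i - k)) M)"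
    by (rule tsf_sum)
  also have "\<dots> = (\<Sum>k=a..- i - b. t (- k))"
  proof (rule sum.cong[OF refl])
    fix k :: int
    have e: "- k - i = - i - k" by linarith
    show "tsf (x $$ k * y $$ (- i - k)) M = t (- k)" by (simp only: t_eq e minus_minus)
  qed
  also have "\<dots> = (\<Sum>j\<in>uminus ` {a..- i - b}. t j)"
    by (subst sum.reindex) (auto simp: inj_on_def)
  also have "\<dots> = (\<Sum>j\<in>{j. F j \<noteq> ser_zero \<and> G (i - j) \<noteq> ser_zero}. t j)"
  proof (rule sum.mono_neutral_right)
    show "{j. F j \<noteq> ser_zero \<and> G (i - j) \<noteq> ser_zero} \<subseteq> uminus ` {a..- i - b}"
    proof
      fix j assume "j \<in> {j. F j \<noteq> ser_zero \<and> G (i - j) \<noteq> ser_zero}"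
      then have "x $$ (- j) \<noteq> 0" "y $$ (j - i) \<noteq> 0"
        using Fj[of j] Gj[of "i - j"] by (auto simp: tsf_eq_zero)
      then have "a \<le> - j" "b \<le> j - i"
        unfolding a_def b_def by (simp_all add: fls_subdegree_leI)
      then have "- j \<in> {a..- i - b}" by simp
      then show "j \<in> uminus ` {a..- i - b}" by (rule rev_image_eqI) simp
    qed
    show "\<forall>j\<in>uminus ` {a..- i - b} - {j. F j \<noteq> ser_zero \<and> G (i - j) \<noteq> ser_zero}. t j = 0"
    proof
      fix j assume "j \<in> uminus ` {a..- i - b} - {j. F j \<noteq> ser_zero \<and> G (i - j) \<noteq> ser_zero}"
      then have "F j = ser_zero \<or> G (i - j) = ser_zero" by blast
      then have "x $$ (- j) = 0 \<or> y $$ (j - i) = 0"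
        using Fj[of j] Gj[of "i - j"] by (auto simp: tsf_eq_zero)
      then show "t j = 0" unfolding t_eq by (auto simp: ser_zero_def)
    qed
  qed simp
  finally show "lmult F G i M = tsf ((x * y) $$ (- i)) M"
    by (simp add: lmult_def t_def)
qed


definition Sh :: "('a::comm_ring_1 \<Rightarrow> 'a) \<Rightarrow> 'a \<Rightarrow> 'a ts fls \<Rightarrow> 'a ts fls" where
  "Sh dx s y = fmap (tD dx) y + fls_const (tsc s) * (Zs * y)"

lemma repL_shiftd': "isder dx \<Longrightarrow> repL F x \<Longrightarrow> repL (shiftd dx s F) (Sh dx s x)"
  unfolding Sh_def by (rule repL_shiftd)

lemma repL_shiftd_pow: "isder dx \<Longrightarrow> repL F x \<Longrightarrow> repL ((shiftd dx s ^^ n) F) ((Sh dx s ^^ n) x)"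
  by (induction n) (simp_all add: repL_shiftd')

lemma ser_mult_one: "ser_mult ser_one f = f"
  by (metis tsf_TS tsf_one tsf_mult mult_1 TS_tsf)

lemma repL_apply_Lop:
  assumes dx: "isder dx" and F: "repL F x"
  shows "repL (apply_op dx s (Lop u) F) (Sh dx s (Sh dx s x) + fls_const (2 * TS u) * x)"
  unfolding repL_def
proof (rule ext, rule ext)
  fix i M
  define t where "t = (\<lambda>n. ser_mult (Lop u (int n)) ((shiftd dx s ^^ n) F i) M)"
  have N: "{n. Lop u (int n) \<noteq> ser_zero} \<subseteq> {0, 2}"
    by (auto simp: Lop_def)
  have "apply_op dx s (Lop u) F i M = (\<Sum>n\<in>{n. Lop u (int n) \<noteq> ser_zero}. t n)"
    by (simp add: apply_op_def t_def)
  also have "\<dots> = (\<Sum>n\<in>{0, 2}. t n)"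
    by (rule sum.mono_neutral_left) (use N in \<open>auto simp: t_def ser_mult_def ser_zero_def\<close>)
  also have "\<dots> = t 0 + t 2" by simp
  also have "t 2 = tsf (Sh dx s (Sh dx s x) $$ (- i)) M"
  proof -
    have "t 2 = (shiftd dx s ^^ 2) F i M" by (simp add: t_def Lop_def ser_mult_one)
    also have "\<dots> = tsf ((Sh dx s ^^ 2) x $$ (- i)) M"
      using repL_shiftd_pow[OF dx F, where s=s and n=2] by (simp add: repL_def)
    finally show ?thesis by (simp add: numeral_2_eq_2)
  qed
  also have "t 0 = tsf ((fls_const (2 * TS u) * x) $$ (- i)) M"
  proof -
    have "t 0 = ser_mult (ser_scale 2 u) (F i) M" by (simp add: t_def Lop_def)
    also have "\<dots> = tsf ((2 * TS u) * x $$ (- i)) M"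
      using F by (simp add: repL_def ser_scale_eq tsf_mult tsc_numeral)
    finally show ?thesis by simp
  qed
  finally show "apply_op dx s (Lop u) F i M =
      tsf ((Sh dx s (Sh dx s x) + fls_const (2 * TS u) * x) $$ (- i)) M" by (simp add: add.commute)
qed


definition repB :: "'a::comm_ring_1 bser \<Rightarrow> 'a ts fls fls \<Rightarrow> bool" where
  "repB P X \<longleftrightarrow> P = (\<lambda>i j. tsf (X $$ (- j) $$ (- i)))"

definition bbX :: "'b::zero fls fls \<Rightarrow> bool" where
  "bbX X \<longleftrightarrow> (\<exists>n. \<forall>c a. (c < - n \<or> a < - n) \<longrightarrow> X $$ c $$ a = 0)"

lemma repB_nth: "repB P X \<Longrightarrow> X $$ c $$ a = TS (P (- a) (- c))"
  by (simp add: repB_def)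

lemma repB_unique: "repB P X \<Longrightarrow> repB P Y \<Longrightarrow> X = Y"
  by (intro fls_eqI) (simp add: repB_nth)

lemma repB_eq: "repB P X \<Longrightarrow> repB Q X \<Longrightarrow> P = Q"
  by (simp add: repB_def)

lemma bbX_mono: "bbX X \<Longrightarrow> \<exists>n\<ge>m. \<forall>c a. (c < - n \<or> a < - n) \<longrightarrow> X $$ c $$ a = 0"
proof -
  assume "bbX X"
  then obtain n where n: "\<forall>c a. (c < - n \<or> a < - n) \<longrightarrow> X $$ c $$ a = 0" by (auto simp: bbX_def)
  show ?thesis
    by (rule exI[of _ "max n m"]) (use n in auto)
qed

lemma repB_bbdd: "repB P X \<Longrightarrow> bbX X \<Longrightarrow> bbdd P"
proof -
  assume r: "repB P X" and b: "bbX X"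
  then obtain n where n: "\<forall>c a. (c < - n \<or> a < - n) \<longrightarrow> X $$ c $$ a = 0" by (auto simp: bbX_def)
  show "bbdd P" unfolding bbdd_def
  proof (intro exI allI impI)
    fix i j assume "n < i \<or> n < j"
    then have "X $$ (- j) $$ (- i) = 0" using n by auto
    then show "P i j = ser_zero" using r by (simp add: repB_def)
  qed
qed

lemma bbdd_rep: "bbdd P \<Longrightarrow> \<exists>X. repB P X \<and> bbX X"
proof -
  assume "bbdd P"
  then obtain n where n: "\<forall>i j. n < i \<or> n < j \<longrightarrow> P i j = ser_zero" by (auto simp: bbdd_def)
  define Xc where "Xc = (\<lambda>c. Abs_fls (\<lambda>a. TS (P (- a) (- c))))"
  have Xc_nth: "Xc c $$ a = TS (P (- a) (- c))" for c a
    unfolding Xc_def by (rule nth_Abs_fls_lower_bound[where N="- n"]) (auto simp: n TS_zero)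
  have Xc0: "c < - n \<Longrightarrow> Xc c = 0" for c
    by (rule fls_eqI) (simp add: Xc_nth n TS_zero)
  define X where "X = Abs_fls Xc"
  have X_nth: "X $$ c = Xc c" for c
    unfolding X_def by (rule nth_Abs_fls_lower_bound[where N="- n"]) (auto simp: Xc0)
  have "repB P X" by (simp add: repB_def X_nth Xc_nth)
  moreover have "bbX X" unfolding bbX_def
    by (rule exI[of _ n]) (auto simp: X_nth Xc_nth n TS_zero)
  ultimately show ?thesis by blast
qed

lemma bbX_const: "bbX (fls_const x)"
  unfolding bbX_def
  by (rule exI[of _ "max 0 (- fls_subdegree x)"]) auto

lemma bbX_wconst: "bbX (fmap fls_const x)"
  unfolding bbX_def
  by (rule exI[of _ "max 0 (- fls_subdegree x)"]) auto

lemma repB_bz: "repL F x \<Longrightarrow> repB (bz F) (fls_const x)"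
  unfolding repB_def repL_def bz_def by (auto simp: fun_eq_iff ser_zero_def)

lemma repB_bw: "repL F x \<Longrightarrow> repB (bw F) (fmap fls_const x)"
  unfolding repB_def repL_def bw_def by (auto simp: fun_eq_iff ser_zero_def)

lemma repB_badd: "repB P X \<Longrightarrow> repB Q Y \<Longrightarrow> repB (badd P Q) (X + Y)"
  unfolding repB_def badd_def ser_add_def by (auto simp: fun_eq_iff)

lemma repB_bsub: "repB P X \<Longrightarrow> repB Q Y \<Longrightarrow> repB (bsub P Q) (X - Y)"
  unfolding repB_def bsub_def ser_sub_def by (auto simp: fun_eq_iff)

lemma repB_bscale: "repB P X \<Longrightarrow> repB (bscale c P) (fls_const (fls_const (tsc c)) * X)"
  unfolding repB_def bscale_def by clarify (simp add: fun_eq_iff ser_scale_eq)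

lemma repB_bdx: "isder dx \<Longrightarrow> repB P X \<Longrightarrow> repB (bdx dx P) (fmap (fmap (tD dx)) X)"
  unfolding repB_def bdx_def
  by clarify (simp add: fun_eq_iff ser_dt0_eq isder_zero tD_isder fmap_der_isder)

lemma bbX_add: "bbX X \<Longrightarrow> bbX Y \<Longrightarrow> bbX (X + Y)"
proof -
  assume "bbX X" "bbX Y"
  then obtain n m where n: "\<forall>c a. (c < - n \<or> a < - n) \<longrightarrow> X $$ c $$ a = 0"
    and m: "\<forall>c a. (c < - m \<or> a < - m) \<longrightarrow> Y $$ c $$ a = 0" by (auto simp: bbX_def)
  show ?thesis unfolding bbX_def
  proof (intro exI[of _ "max n m"] allI impI)
    fix c a assume "c < - max n m \<or> a < - max n m"
    then have "X $$ c $$ a = 0" "Y $$ c $$ a = 0" using n m by auto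
    then show "(X + Y) $$ c $$ a = 0" by simp
  qed
qed

lemma bbX_diff: "bbX X \<Longrightarrow> bbX Y \<Longrightarrow> bbX (X - Y)"
proof -
  assume "bbX X" "bbX Y"
  then obtain n m where n: "\<forall>c a. (c < - n \<or> a < - n) \<longrightarrow> X $$ c $$ a = 0"
    and m: "\<forall>c a. (c < - m \<or> a < - m) \<longrightarrow> Y $$ c $$ a = 0" by (auto simp: bbX_def)
  show ?thesis unfolding bbX_def
  proof (intro exI[of _ "max n m"] allI impI)
    fix c a assume "c < - max n m \<or> a < - max n m"
    then have "X $$ c $$ a = 0" "Y $$ c $$ a = 0" using n m by auto
    then show "(X - Y) $$ c $$ a = 0" by simp
  qed
qed

lemma bbX_D: "isder d \<Longrightarrow> bbX X \<Longrightarrow> bbX (fmap (fmap d) X)"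
proof -
  assume d: "isder d" and "bbX X"
  then obtain n where n: "\<forall>c a. (c < - n \<or> a < - n) \<longrightarrow> X $$ c $$ a = 0" by (auto simp: bbX_def)
  show ?thesis unfolding bbX_def
    by (rule exI[of _ n]) (auto simp: n d isder_zero fmap_der_isder)
qed


lemma times_lb_zero:
  fixes x y :: "'b::comm_ring_1 fls"
  assumes "\<And>i. i < a \<Longrightarrow> x $$ i = 0" "\<And>i. i < b \<Longrightarrow> y $$ i = 0" "k < a + b"
  shows "(x * y) $$ k = 0"
  using assms by (subst fls_times_nth_lb[where a=a and b=b]) auto

lemma bbX_common:
  assumes "bbX X" "bbX Y"
  obtains n where "n \<ge> 0" "\<And>c a. c < - n \<or> a < - n \<Longrightarrow> X $$ c $$ a = 0"
    "\<And>c a. c < - n \<or> a < - n \<Longrightarrow> Y $$ c $$ a = 0"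
proof -
  obtain n m where n: "\<forall>c a. (c < - n \<or> a < - n) \<longrightarrow> X $$ c $$ a = 0"
    and m: "\<forall>c a. (c < - m \<or> a < - m) \<longrightarrow> Y $$ c $$ a = 0" using assms by (auto simp: bbX_def)
  show ?thesis
  proof (rule that[of "max 0 (max n m)"])
    fix c a assume "c < - max 0 (max n m) \<or> a < - max 0 (max n m)"
    then show "X $$ c $$ a = 0" "Y $$ c $$ a = 0" using n m by auto
  qed simp
qed

lemma outer_zero: "(\<And>a. X $$ c $$ a = 0) \<Longrightarrow> X $$ c = 0"
  by (rule fls_eqI) simp

lemma bbX_mult:
  fixes X Y :: "'b::comm_ring_1 fls fls"
  assumes "bbX X" "bbX Y" shows "bbX (X * Y)"
proof -
  obtain n where n0: "n \<ge> 0" and X: "\<And>c a. c < - n \<or> a < - n \<Longrightarrow> X $$ c $$ a = 0"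
    and Y: "\<And>c a. c < - n \<or> a < - n \<Longrightarrow> Y $$ c $$ a = 0"
    using bbX_common[OF assms] by blast
  have Xo: "c < - n \<Longrightarrow> X $$ c = 0" for c by (rule outer_zero) (simp add: X)
  have Yo: "c < - n \<Longrightarrow> Y $$ c = 0" for c by (rule outer_zero) (simp add: Y)
  show ?thesis unfolding bbX_def
  proof (intro exI[of _ "2 * n"] allI impI)
    fix c a assume ca: "c < - (2 * n) \<or> a < - (2 * n)"
    have e: "(X * Y) $$ c = (\<Sum>c'=- n..c - - n. X $$ c' * Y $$ (c - c'))"
      by (rule fls_times_nth_lb) (simp_all add: Xo Yo)
    show "(X * Y) $$ c $$ a = 0"
    proof (cases "c < - (2 * n)")
      case True then show ?thesis unfolding e by simp
    next
      case False
      then have a: "a < - n + - n" using ca by simp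
      show ?thesis unfolding e fls_sum_nth
        by (rule sum.neutral, intro ballI times_lb_zero[OF _ _ a]) (simp_all add: X Y)
    qed
  qed
qed

lemma repB_bmult:
  assumes P: "repB P X" and Q: "repB Q Y" and bX: "bbX X" and bY: "bbX Y"
  shows "repB (bmult P Q) (X * Y)"
  unfolding repB_def
proof (rule ext, rule ext, rule ext)
  fix i j M
  obtain n where n0: "n \<ge> 0" and Xz: "\<And>c a. c < - n \<or> a < - n \<Longrightarrow> X $$ c $$ a = 0"
    and Yz: "\<And>c a. c < - n \<or> a < - n \<Longrightarrow> Y $$ c $$ a = 0"
    using bbX_common[OF bX bY] by blast
  have Xo: "c < - n \<Longrightarrow> X $$ c = 0" for c by (rule outer_zero) (simp add: Xz)
  have Yo: "c < - n \<Longrightarrow> Y $$ c = 0" for c by (rule outer_zero) (simp add: Yz)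
  have Pe: "P a c = tsf (X $$ (- c) $$ (- a))" for a c using P by (simp add: repB_def)
  have Qe: "Q a c = tsf (Y $$ (- c) $$ (- a))" for a c using Q by (simp add: repB_def)
  define t where "t = (\<lambda>(a, c). ser_mult (P a c) (Q (i - a) (j - c)) M)"
  have t_eq: "t (- a', - c') = tsf (X $$ c' $$ a' * Y $$ (- j - c') $$ (- i - a')) M" for a' c'
  proof -
    have e: "- c' - j = - j - c'" "- a' - i = - i - a'" by simp_all
    show ?thesis by (simp add: t_def Pe Qe tsf_mult e)
  qed
  define C where "C = {- n..- j - - n}"
  define A where "A = {- n..- i - - n}"
  have "tsf ((X * Y) $$ (- j) $$ (- i)) M =
      tsf ((\<Sum>c'\<in>C. X $$ c' * Y $$ (- j - c')) $$ (- i)) M"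
    unfolding C_def by (subst fls_times_nth_lb[where a="- n" and b="- n"]) (simp_all add: Xo Yo)
  also have "\<dots> = (\<Sum>c'\<in>C. \<Sum>a'\<in>A. tsf (X $$ c' $$ a' * Y $$ (- j - c') $$ (- i - a')) M)"
    unfolding fls_sum_nth tsf_sum A_def
    by (intro sum.cong refl, subst fls_times_nth_lb[where a="- n" and b="- n"])
       (simp_all add: Xz Yz tsf_sum)
  also have "\<dots> = (\<Sum>(c', a')\<in>C \<times> A. t (- a', - c'))"
    by (simp add: sum.cartesian_product t_eq)
  also have "\<dots> = (\<Sum>p\<in>(\<lambda>(c', a'). (- a', - c')) ` (C \<times> A). t p)"
    by (subst sum.reindex) (auto simp: inj_on_def case_prod_beta)
  also have "\<dots> = (\<Sum>p\<in>{(a, c). P a c \<noteq> ser_zero \<and> Q (i - a) (j - c) \<noteq> ser_zero}. t p)"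
  proof (rule sum.mono_neutral_right)
    show "finite ((\<lambda>(c', a'). (- a', - c')) ` (C \<times> A))" by (simp add: A_def C_def)
    show "{(a, c). P a c \<noteq> ser_zero \<and> Q (i - a) (j - c) \<noteq> ser_zero} \<subseteq> (\<lambda>(c', a'). (- a', - c')) ` (C \<times> A)"
    proof
      fix p assume "p \<in> {(a, c). P a c \<noteq> ser_zero \<and> Q (i - a) (j - c) \<noteq> ser_zero}"
      then obtain a c where p: "p = (a, c)" and nz: "P a c \<noteq> ser_zero" "Q (i - a) (j - c) \<noteq> ser_zero"
        by blast
      have "X $$ (- c) $$ (- a) \<noteq> 0" "Y $$ (c - j) $$ (a - i) \<noteq> 0"
        using nz Pe[of a c] Qe[of "i - a" "j - c"] by (auto simp: tsf_eq_zero)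
      then have "\<not> (- c < - n \<or> - a < - n)" "\<not> (c - j < - n \<or> a - i < - n)"
        using Xz Yz by blast+
      then have "- c \<in> C" "- a \<in> A" by (auto simp: C_def A_def)
      then show "p \<in> (\<lambda>(c', a'). (- a', - c')) ` (C \<times> A)"
        unfolding p by (intro rev_image_eqI[of "(- c, - a)"]) auto
    qed
    show "\<forall>p\<in>(\<lambda>(c', a'). (- a', - c')) ` (C \<times> A) - {(a, c). P a c \<noteq> ser_zero \<and> Q (i - a) (j - c) \<noteq> ser_zero}. t p = 0"
      by (auto simp: t_def ser_mult_def ser_zero_def)
  qed
  finally show "bmult P Q i j M = tsf ((X * Y) $$ (- j) $$ (- i)) M"
    by (simp add: bmult_def t_def case_prod_beta)
qed


lemma fls_inverse_ex:
  fixes x :: "'b::comm_ring_1 fls"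
  assumes x0: "x $$ 0 = 1" and xneg: "\<forall>k<0. x $$ k = 0"
  shows "\<exists>y. x * y = 1 \<and> (\<forall>k<0. y $$ k = 0)"
proof -
  define p where "p = fls_regpart x"
  have xe: "x = fps_to_fls p"
    unfolding p_def by (rule fls_eqI) (use xneg in auto)
  define y where "y = fps_to_fls (fps_right_inverse p 1)"
  have pq: "p * fps_right_inverse p 1 = 1"
    by (rule fps_right_inverse) (simp add: x0 p_def)
  have "x * y = fps_to_fls (p * fps_right_inverse p 1)"
    unfolding y_def xe by (rule fls_times_fps_to_fls[symmetric])
  then have "x * y = 1" unfolding pq by simp
  moreover have "\<forall>k<0. y $$ k = 0" by (simp add: y_def)
  ultimately show ?thesis by blast
qed

lemma bquot_rep:
  assumes A: "repB A X" and bA: "bbX X" and B: "repB B Y" and bB: "bbX Y"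
    and inv: "Xi * X = 1" and bb: "bbX (Xi * Y)"
  shows "repB (bquot B A) (Xi * Y) \<and> bbdd (bquot B A)"
proof -
  define R0 where "R0 = (\<lambda>i j. tsf ((Xi * Y) $$ (- j) $$ (- i)))"
  have r0: "repB R0 (Xi * Y)" by (simp add: repB_def R0_def)
  have b0: "bbdd R0" by (rule repB_bbdd[OF r0 bb])
  have "X * (Xi * Y) = (Xi * X) * Y" by (simp add: mult_ac)
  then have XY: "X * (Xi * Y) = Y" using inv by simp
  have m0: "bmult A R0 = B"
    using repB_bmult[OF A r0 bA bb] B unfolding XY by (rule repB_eq)
  have uniq: "R = R0" if h: "bbdd R \<and> bmult A R = B" for R
  proof -
    obtain Z where z: "repB R Z" "bbX Z" using bbdd_rep[of R] h by blast
    have "repB B (X * Z)" using repB_bmult[OF A z(1) bA z(2)] h by simp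
    then have "X * Z = Y" using B by (rule repB_unique)
    then have "Xi * (X * Z) = Xi * Y" by simp
    moreover have "Xi * (X * Z) = Z" using inv by (simp add: mult.assoc[symmetric])
    ultimately have "Z = Xi * Y" by simp
    then show "R = R0" using z(1) r0 by (simp add: repB_eq)
  qed
  have "bquot B A = R0"
    unfolding bquot_def by (rule the_equality) (use b0 m0 uniq in blast)+
  then show ?thesis using r0 b0 by simp
qed


lemma ident_gen:
  fixes f g :: "'r::comm_ring_1 fls"
  assumes d: "isder d"
    and Lf: "fmap d (fmap d f) + 2 * (Zs * fmap d f) + fls_const (2 * U) * f = 0"
    and Lg: "fmap d (fmap d g) - 2 * (Zs * fmap d g) + fls_const (2 * U) * g = 0"
  shows "2 * (f * g) * fmap d (fmap d (f * g)) - fmap d (f * g) * fmap d (f * g)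
      - 4 * (Zs * (Zs * ((f * g) * (f * g)))) + 4 * fls_const (2 * U) * ((f * g) * (f * g))
    = - ((f * fmap d g - fmap d f * g - 2 * (Zs * (f * g))) * (f * fmap d g - fmap d f * g - 2 * (Zs * (f * g))))"
proof -
  define R where "R = f * g"
  define a1 where "a1 = fmap d f"
  define b1 where "b1 = fmap d g"
  define c where "c = fls_const (2 * U)"
  have DR: "fmap d R = a1 * g + f * b1"
    unfolding R_def a1_def b1_def by (rule fmap_der_mult[OF d])
  have DDf: "fmap d a1 = - 2 * (Zs * a1) - c * f" using Lf unfolding a1_def c_def
    by (simp add: algebra_simps eq_neg_iff_add_eq_0)
  have DDg: "fmap d b1 = 2 * (Zs * b1) - c * g" using Lg unfolding b1_def c_def
    by (simp add: algebra_simps eq_neg_iff_add_eq_0)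
  have DDR: "fmap d (fmap d R) = fmap d a1 * g + 2 * (a1 * b1) + f * fmap d b1"
    unfolding DR by (simp add: D_add[OF d] fmap_der_mult[OF d] a1_def b1_def algebra_simps)
  define W where "W = f * b1 - a1 * g - 2 * (Zs * R)"
  have ident0: "2 * R * ((- 2 * (Zs * a1) - c * f) * g + 2 * (a1 * b1) + f * (2 * (Zs * b1) - c * g))
      - (a1 * g + f * b1) * (a1 * g + f * b1) - 4 * (Zs * (Zs * (R * R))) + 4 * c * (R * R)
      = - (W * W)"
    unfolding W_def R_def by (simp add: algebra_simps)
  have "2 * R * fmap d (fmap d R) - fmap d R * fmap d R - 4 * (Zs * (Zs * (R * R))) + 4 * c * (R * R)
      = - (W * W)"
    unfolding DDR unfolding DDf DDg DR by (rule ident0)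
  then show ?thesis unfolding R_def c_def W_def a1_def b1_def .
qed

lemma final_alg:
  fixes a b a1 b1 zz c e c1 e1 ww h :: "'r::comm_ring_1"
  assumes h2: "2 * h = 1"
    and Wz: "a * b1 - a1 * b - 2 * (zz * (a * b)) = - (2 * zz)"
    and Ww: "c * e1 - c1 * e - 2 * (ww * (c * e)) = - (2 * ww)"
  shows "h * ((a * b) * (c1 * e + c * e1) - (c * e) * (a1 * b + a * b1)) - (ww * (a * b) + zz * (c * e))
    = (b * c) * (a * (e1 - ww * e) - e * (a1 + zz * a))"
proof -
  have c1e: "c1 * e = c * e1 - 2 * (ww * (c * e)) + 2 * ww"
    using Ww by (simp add: algebra_simps eq_neg_iff_add_eq_0)
  have ab1: "a * b1 = a1 * b + 2 * (zz * (a * b)) - 2 * zz"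
    using Wz by (simp add: algebra_simps eq_neg_iff_add_eq_0)
  define T where "T = (a * b) * (c * e1 - ww * (c * e) + ww) - (c * e) * (a1 * b + zz * (a * b) - zz)"
  have "(a * b) * (c1 * e + c * e1) - (c * e) * (a1 * b + a * b1) = 2 * T"
    unfolding c1e ab1 T_def by (simp add: algebra_simps)
  then have "h * ((a * b) * (c1 * e + c * e1) - (c * e) * (a1 * b + a * b1)) = T"
    using h2 by (simp add: mult.assoc[symmetric] mult.commute[of h 2])
  then show ?thesis unfolding T_def by (simp add: algebra_simps)
qed


lemma kdv_isder: "kdv_setting sc dx V \<Longrightarrow> isder dx"
  by (simp add: kdv_setting_def isder_def)

lemma kdv_sc0: "kdv_setting sc dx V \<Longrightarrow> sc 0 = 0"
  unfolding kdv_setting_def by (metis add_cancel_right_right add_0)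

lemma kdv_sc2: "kdv_setting sc dx V \<Longrightarrow> sc 2 = 2"
proof -
  assume S: "kdv_setting sc dx V"
  have add: "\<forall>a b. sc (a + b) = sc a + sc b" and one: "sc 1 = 1"
    using S by (simp_all add: kdv_setting_def)
  have "sc (1 + 1) = sc 1 + sc 1" using add by blast
  then show ?thesis using one by simp
qed

lemma kdv_half: "kdv_setting sc dx V \<Longrightarrow> 2 * tsc (sc (1/2)) = (1 :: 'a::comm_ring_1 ts)"
proof -
  assume S: "kdv_setting sc dx V"
  have mult: "\<forall>a b. sc (a * b) = sc a * sc b" and one: "sc 1 = 1"
    using S by (simp_all add: kdv_setting_def)
  have "sc 2 * sc (1/2) = sc (2 * (1/2))" using mult by metis
  also have "\<dots> = 1" using one by simp
  finally have e: "2 * sc (1/2) = (1::'a)" using kdv_sc2[OF S] by simp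
  have "2 * tsc (sc (1/2)) = tsc (2 * sc (1/2))" by (simp add: tsc_mult tsc_numeral)
  then show ?thesis using e by (simp add: tsc_one)
qed

definition PV :: "'a::comm_ring_1 set \<Rightarrow> 'a ts \<Rightarrow> bool" where
  "PV V x \<longleftrightarrow> (\<forall>M. tsf x M \<in> V)"

lemma PV_facts:
  assumes S: "kdv_setting sc dx V"
  shows "PV V 0" "PV V 1" "PV V (tsc (sc c))"
    "\<And>x y. PV V x \<Longrightarrow> PV V y \<Longrightarrow> PV V (x + y)"
    "\<And>x y. PV V x \<Longrightarrow> PV V y \<Longrightarrow> PV V (x * y)"
    "\<And>x. PV V x \<Longrightarrow> PV V (- x)"
    "\<And>x. PV V x \<Longrightarrow> PV V (tD dx x)"
proof -
  have rs: "sc c \<in> V" for c using S by (auto simp: kdv_setting_def)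
  have V0: "0 \<in> V" using rs[of 0] kdv_sc0[OF S] by simp
  have V1: "1 \<in> V" using rs[of 1] S by (simp add: kdv_setting_def)
  have Vadd: "a \<in> V \<Longrightarrow> b \<in> V \<Longrightarrow> a + b \<in> V" for a b using S by (simp add: kdv_setting_def)
  have Vmult: "a \<in> V \<Longrightarrow> b \<in> V \<Longrightarrow> a * b \<in> V" for a b using S by (simp add: kdv_setting_def)
  have Vneg: "a \<in> V \<Longrightarrow> - a \<in> V" for a using S by (simp add: kdv_setting_def)
  have Vdx: "a \<in> V \<Longrightarrow> dx a \<in> V" for a using S by (simp add: kdv_setting_def)
  have Vsum: "(\<And>i. i \<in> A \<Longrightarrow> h i \<in> V) \<Longrightarrow> sum h A \<in> V" for h and A :: "'b set"
    by (induction A rule: infinite_finite_induct) (auto simp: V0 Vadd)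
  show "PV V 0" by (simp add: PV_def ser_zero_def V0)
  show "PV V 1" by (simp add: PV_def ser_one_def V0 V1)
  show "PV V (tsc (sc c))" by (simp add: PV_def tsc_def V0 rs)
  show "\<And>x y. PV V x \<Longrightarrow> PV V y \<Longrightarrow> PV V (x + y)" by (simp add: PV_def Vadd)
  show "\<And>x y. PV V x \<Longrightarrow> PV V y \<Longrightarrow> PV V (x * y)"
    by (simp add: PV_def tsf_mult ser_mult_def Vsum Vmult)
  show "\<And>x. PV V x \<Longrightarrow> PV V (- x)" by (simp add: PV_def Vneg)
  show "\<And>x. PV V x \<Longrightarrow> PV V (tD dx x)" by (simp add: PV_def Vdx)
qed

lemma repL_bounded: "(\<forall>i>n. B i = ser_zero) \<Longrightarrow> \<exists>x. repL B x"
proof -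
  assume b: "\<forall>i>n. B i = ser_zero"
  define x where "x = Abs_fls (\<lambda>k. TS (B (- k)))"
  have "x $$ k = TS (B (- k))" for k
    unfolding x_def by (rule nth_Abs_fls_lower_bound[where N="- n"]) (auto simp: b TS_zero)
  then have "repL B x" by (simp add: repL_def)
  then show ?thesis by blast
qed

lemma EQ_iff:
  assumes S: "kdv_setting sc dx V" and B: "repL B x"
  shows "(lsub (lsub (lmult B (ldx dx (ldx dx B)))
                 (lscale (sc (1/2)) (lmult (ldx dx B) (ldx dx B))))
           (lscale 2 (lmult (lsub lvar (lconst (ser_scale 2 u))) (lmult B B)))
      = lscale (-2) lvar) \<longleftrightarrow> Beq (tD dx) (tsc (sc (1/2))) (TS u) x"
proof -
  have dx: "isder dx" by (rule kdv_isder[OF S])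
  define Lx where "Lx = x * fmap (tD dx) (fmap (tD dx) x) - fls_const (tsc (sc (1/2))) * (fmap (tD dx) x * fmap (tD dx) x)
     - fls_const (tsc 2) * ((Zs - fls_const (TS (ser_scale 2 u))) * (x * x))"
  define Rx where "Rx = fls_const (tsc (- 2)) * (Zs :: 'a ts fls)"
  have rB: "repL (ldx dx B) (fmap (tD dx) x)" by (rule repL_ldx[OF dx B])
  have rL: "repL (lsub (lsub (lmult B (ldx dx (ldx dx B)))
                 (lscale (sc (1/2)) (lmult (ldx dx B) (ldx dx B))))
           (lscale 2 (lmult (lsub lvar (lconst (ser_scale 2 u))) (lmult B B)))) Lx"
    unfolding Lx_def
    by (intro repL_lsub repL_lmult repL_lscale repL_ldx[OF dx] rB B repL_lvar repL_lconst)
  have rR: "repL (lscale (-2) lvar) Rx" unfolding Rx_def by (intro repL_lscale repL_lvar)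
  have "TS (ser_scale 2 u) = 2 * TS u" by (simp add: ser_scale_eq tsc_numeral)
  then have LxE: "Lx = x * fmap (tD dx) (fmap (tD dx) x) - fls_const (tsc (sc (1/2))) * (fmap (tD dx) x * fmap (tD dx) x)
     - 2 * ((Zs - fls_const (2 * TS u)) * (x * x))"
    unfolding Lx_def by (simp add: tsc_numeral)
  have RxE: "Rx = - (2 * Zs)" unfolding Rx_def by (simp add: tsc_uminus tsc_numeral)
  have "(lsub (lsub (lmult B (ldx dx (ldx dx B)))
                 (lscale (sc (1/2)) (lmult (ldx dx B) (ldx dx B))))
           (lscale 2 (lmult (lsub lvar (lconst (ser_scale 2 u))) (lmult B B)))
      = lscale (-2) lvar) \<longleftrightarrow> Lx = Rx"
    using rL rR repL_unique repL_eq by metis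
  also have "\<dots> \<longleftrightarrow> Beq (tD dx) (tsc (sc (1/2))) (TS u) x"
    unfolding LxE RxE Beq_def ..
  finally show ?thesis .
qed


lemma bser_rep:
  assumes S: "kdv_setting sc dx V" and u: "ser_in V u"
    and B0: "Bl $$ 0 = 1" and Bneg: "\<forall>k<0. Bl $$ k = 0"
    and Be: "Beq (tD dx) (tsc (sc (1/2))) (TS u) Bl"
  shows "repL (bser sc dx V u) Bl"
proof -
  have dx: "isder dx" by (rule kdv_isder[OF S])
  have d: "isder (tD dx)" by (rule tD_isder[OF dx])
  have H: "2 * tsc (sc (1/2)) = (1 :: 'a ts)" by (rule kdv_half[OF S])
  define B0f where "B0f = (\<lambda>i. tsf (Bl $$ (- i)))"
  have r0: "repL B0f Bl" by (simp add: B0f_def repL_def)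
  have PVB: "PV V (Bl $$ k)" for k
  proof (rule Beq_P[OF d H Be B0 Bneg])
    show "PV V (TS u)" using u by (simp add: PV_def ser_in_def)
  qed (use PV_facts[OF S] in auto)
  have Q0: "B0f 0 = ser_one \<and> (\<forall>i>0. B0f i = ser_zero) \<and> (\<forall>i. ser_in V (B0f i)) \<and>
      lsub (lsub (lmult B0f (ldx dx (ldx dx B0f)))
                 (lscale (sc (1/2)) (lmult (ldx dx B0f) (ldx dx B0f))))
           (lscale 2 (lmult (lsub lvar (lconst (ser_scale 2 u))) (lmult B0f B0f)))
      = lscale (-2) lvar"
    using B0 Bneg PVB EQ_iff[OF S r0, of u] Be
    by (auto simp: B0f_def ser_in_def PV_def)
  have uniq: "B = B0f" if h: "B 0 = ser_one \<and> (\<forall>i>0. B i = ser_zero) \<and> (\<forall>i. ser_in V (B i)) \<and>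
      lsub (lsub (lmult B (ldx dx (ldx dx B)))
                 (lscale (sc (1/2)) (lmult (ldx dx B) (ldx dx B))))
           (lscale 2 (lmult (lsub lvar (lconst (ser_scale 2 u))) (lmult B B)))
      = lscale (-2) lvar" for B
  proof -
    obtain x where x: "repL B x" using repL_bounded[of 0 B] h by blast
    have "Beq (tD dx) (tsc (sc (1/2))) (TS u) x" using EQ_iff[OF S x, of u] h by blast
    moreover have "x $$ 0 = 1" using repL_nth[OF x, of 0] h by (simp add: one_ts_def)
    moreover have "\<forall>k<0. x $$ k = 0" using repL_nth[OF x] h by (simp add: TS_zero)
    ultimately have "x = Bl" using Beq_unique[OF d H _ _ _ Be B0 Bneg] by blast
    then show "B = B0f" using x r0 repL_eq by blast
  qed
  have "bser sc dx V u = B0f"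
    unfolding bser_def by (rule the_equality) (use Q0 uniq in blast)+
  then show ?thesis using r0 by simp
qed


lemma ishom_of_nat: "ishom h \<Longrightarrow> h (of_nat n) = of_nat n"
  by (induction n) (simp_all add: ishom_zero ishom_add ishom_one)

lemma ishom_numeral: "ishom h \<Longrightarrow> h (numeral n) = numeral n"
  by (metis ishom_of_nat of_nat_numeral)

lemma Cw_hom: "ishom (fmap (fls_const :: 'b::comm_ring_1 \<Rightarrow> 'b fls))"
  by (rule fmap_hom_ishom[OF fls_const_ishom])

lemma DD_Ch: "isder d \<Longrightarrow> fmap (fmap d) (fls_const x) = fls_const (fmap d x)"
  by (rule fmap_const) (rule fls_eqI, simp add: isder_zero)

lemma DD_Cw: "isder d \<Longrightarrow> fmap (fmap d) (fmap fls_const x) = fmap fls_const (fmap d x)"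
  by (intro fls_eqI) (simp add: isder_zero fmap_der_isder fmap_const)

lemma wL0: "wL phi $$ 0 = 1" by (simp add: wL_nth)
lemma wLneg: "\<forall>k<0. wL phi $$ k = 0" by (simp add: wL_nth)


theorem proposition1p5:
  fixes sc :: "complex \<Rightarrow> 'a::comm_ring_1"
    and dx :: "'a \<Rightarrow> 'a"
    and V :: "'a set"
    and u :: "'a ser"
    and phi phis :: "nat \<Rightarrow> 'a ser"
  assumes "kdv_setting sc dx V"
    and "ser_in V u"
    and "kdv_solution sc dx u"
    and "is_wave_function sc dx u phi"
    and "is_dual_wave_function sc dx u phi phis"
  shows "Knum sc dx V u =
           bmult (bz (lsq (bser sc dx V u)))
             (bmult (bquot (bw (wser phi)) (bz (wser phi))) (Dnum dx phi phis))
       \<and> Knum sc dx V u =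
           bmult (bw (lsq (bser sc dx V u)))
             (bmult (bquot (bz (wser phis)) (bw (wser phis))) (Dnum dx phi phis))
       \<and> Knum sc dx V u =
           bmult (bmult (bz (wser phis)) (bw (wser phi))) (Dnum dx phi phis)"
proof -
  note S = assms(1)
  have dx: "isder dx" by (rule kdv_isder[OF S])
  define d where "d = tD dx"
  have d: "isder d" unfolding d_def by (rule tD_isder[OF dx])
  define H where "H = tsc (sc (1/2))"
  have H2: "2 * H = 1" unfolding H_def by (rule kdv_half[OF S])
  define U where "U = TS u"
  define f where "f = wL phi"
  define g where "g = wL phis"
  have rf: "repL (wser phi) f" unfolding f_def by (rule repL_wser)
  have rg: "repL (wser phis) g" unfolding g_def by (rule repL_wser)
  have f0: "f $$ 0 = 1" and fneg: "\<forall>k<0. f $$ k = 0" unfolding f_def by (rule wL0, rule wLneg)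
  have g0: "g $$ 0 = 1" and gneg: "\<forall>k<0. g $$ k = 0" unfolding g_def by (rule wL0, rule wLneg)
  have Sh1: "Sh dx 1 y = fmap d y + Zs * y" for y by (simp add: Sh_def d_def tsc_one)
  have Shm1: "Sh dx (-1) y = fmap d y - Zs * y" for y by (simp add: Sh_def d_def tsc_uminus tsc_one)
  have wf: "apply_op dx 1 (Lop u) (wser phi) = (\<lambda>i. wser phi (i - 2))"
    using assms(4) by (simp add: is_wave_function_def wave_eqs_def)
  have wg: "apply_op dx (-1) (Lop u) (wser phis) = (\<lambda>i. wser phis (i - 2))"
    using assms(5) by (simp add: is_dual_wave_function_def wave_eqs_def)
  have ef: "Sh dx 1 (Sh dx 1 f) + fls_const (2 * U) * f = Zs * (Zs * f)"
    using repL_apply_Lop[OF dx rf, of 1 u] repL_shift2[OF rf] unfolding wf U_def by (rule repL_unique)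
  have eg: "Sh dx (-1) (Sh dx (-1) g) + fls_const (2 * U) * g = Zs * (Zs * g)"
    using repL_apply_Lop[OF dx rg, of "-1" u] repL_shift2[OF rg] unfolding wg U_def by (rule repL_unique)
  have Lf: "fmap d (fmap d f) + 2 * (Zs * fmap d f) + fls_const (2 * U) * f = 0"
  proof -
    have "Sh dx 1 (Sh dx 1 f) = fmap d (fmap d f) + 2 * (Zs * fmap d f) + Zs * (Zs * f)"
      unfolding Sh1 by (simp add: D_add[OF d] D_Z[OF d] algebra_simps)
    then show ?thesis using ef by (simp add: algebra_simps)
  qed
  have Lg: "fmap d (fmap d g) - 2 * (Zs * fmap d g) + fls_const (2 * U) * g = 0"
  proof -
    have "Sh dx (-1) (Sh dx (-1) g) = fmap d (fmap d g) - 2 * (Zs * fmap d g) + Zs * (Zs * g)"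
      unfolding Shm1 by (simp add: D_add[OF d] D_Z[OF d] fmap_add isder_diff[OF fmap_der_isder[OF d]] algebra_simps)
    then have e1: "fmap d (fmap d g) - 2 * (Zs * fmap d g) = Sh dx (-1) (Sh dx (-1) g) - Zs * (Zs * g)"
      by (simp add: eq_diff_eq)
    have "fmap d (fmap d g) - 2 * (Zs * fmap d g) + fls_const (2 * U) * g
        = (Sh dx (-1) (Sh dx (-1) g) + fls_const (2 * U) * g) - Zs * (Zs * g)"
      unfolding e1 by (simp add: algebra_simps)
    also have "\<dots> = 0" unfolding eg by simp
    finally show ?thesis .
  qed
  have ShDl: "Sh dx 1 = Dl d" by (rule ext) (simp add: Sh1 Dl_def)
  have dual: "f \<in> Sm d g 1"
    unfolding Sm_def
  proof (intro CollectI allI)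
    fix i
    have z: "lmult ((shiftd dx 1 ^^ i) (wser phi)) (wser phis) (-1) = ser_zero"
      using assms(5) by (simp add: is_dual_wave_function_def)
    have "repL (lmult ((shiftd dx 1 ^^ i) (wser phi)) (wser phis)) ((Sh dx 1 ^^ i) f * g)"
      by (intro repL_lmult repL_shiftd_pow[OF dx rf] rg)
    then have "tsf (((Sh dx 1 ^^ i) f * g) $$ 1) = ser_zero"
      using z by (simp add: repL_def)
    then show "((Dl d ^^ i) f * g) $$ 1 = 0" unfolding ShDl by (simp add: tsf_eq_zero)
  qed
  have W: "f * fmap d g - fmap d f * g - 2 * (Zs * (f * g)) = - (2 * Zs)"
    and evR: "ev (f * g)"
    using wronski[OF d H2 f0 fneg g0 gneg Lf Lg dual] by blast+
  have ident: "2 * (f * g) * fmap d (fmap d (f * g)) - fmap d (f * g) * fmap d (f * g)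
      - 4 * (Zs * (Zs * ((f * g) * (f * g)))) + 4 * fls_const (2 * U) * ((f * g) * (f * g))
    = - (4 * (Zs * Zs))"
    using ident_gen[OF d Lf Lg] unfolding W by (simp add: algebra_simps)
  define Bl where "Bl = half (f * g)"
  have BeqB: "Beq d H U Bl" unfolding Bl_def by (rule half_Beq[OF d H2 evR ident])
  have Bl0: "Bl $$ 0 = 1" unfolding Bl_def half_nth using lb0_mult_0[OF fneg gneg] f0 g0 by simp
  have Blneg: "\<forall>k<0. Bl $$ k = 0" unfolding Bl_def half_nth using lb0_mult_neg[OF fneg gneg] by simp
  have rb: "repL (bser sc dx V u) Bl"
    by (rule bser_rep[OF S assms(2) Bl0 Blneg]) (use BeqB in \<open>simp add: d_def H_def U_def\<close>)
  have rsq: "repL (lsq (bser sc dx V u)) (f * g)"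
    using repL_lsq[OF rb] unfolding Bl_def sq2_half[OF evR] .
  define Cw :: "'a ts fls \<Rightarrow> 'a ts fls fls" where "Cw = fmap fls_const"
  define Ch :: "'a ts fls \<Rightarrow> 'a ts fls fls" where "Ch = fls_const"
  have hCw: "ishom Cw" unfolding Cw_def by (rule Cw_hom)
  have hCh: "ishom Ch" unfolding Ch_def by (rule fls_const_ishom)
  have bCw: "bbX (Cw x)" for x unfolding Cw_def by (rule bbX_wconst)
  have bCh: "bbX (Ch x)" for x unfolding Ch_def by (rule bbX_const)
  have DDCh: "fmap (fmap d) (Ch x) = Ch (fmap d x)" for x unfolding Ch_def by (rule DD_Ch[OF d])
  have DDCw: "fmap (fmap d) (Cw x) = Cw (fmap d x)" for x unfolding Cw_def by (rule DD_Cw[OF d])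
  define R where "R = f * g"
  have rZ: "repB (bz (lsq (bser sc dx V u))) (Ch R)" unfolding Ch_def R_def by (rule repB_bz[OF rsq])
  have rW: "repB (bw (lsq (bser sc dx V u))) (Cw R)" unfolding Cw_def R_def by (rule repB_bw[OF rsq])
  have rlz: "repB (bz lvar) (Ch Zs)" unfolding Ch_def by (rule repB_bz[OF repL_lvar])
  have rlw: "repB (bw lvar) (Cw Zs)" unfolding Cw_def by (rule repB_bw[OF repL_lvar])
  define K where "K = fls_const (fls_const H) * (Ch R * fmap (fmap d) (Cw R) - Cw R * fmap (fmap d) (Ch R))
      - (Cw Zs * Ch R + Ch Zs * Cw R)"
  have bK: "bbX K" unfolding K_def
    by (intro bbX_diff bbX_add bbX_mult bbX_const bCw bCh bbX_D[OF d])
  have rK: "repB (Knum sc dx V u) K"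
  proof -
    have r1: "repB (bmult (bz (lsq (bser sc dx V u))) (bdx dx (bw (lsq (bser sc dx V u)))))
        (Ch R * fmap (fmap d) (Cw R))"
      unfolding d_def by (rule repB_bmult[OF rZ repB_bdx[OF dx rW] bCh bbX_D[OF tD_isder[OF dx] bCw]])
    have r2: "repB (bmult (bw (lsq (bser sc dx V u))) (bdx dx (bz (lsq (bser sc dx V u)))))
        (Cw R * fmap (fmap d) (Ch R))"
      unfolding d_def by (rule repB_bmult[OF rW repB_bdx[OF dx rZ] bCw bbX_D[OF tD_isder[OF dx] bCh]])
    have r3: "repB (bmult (bw lvar) (bz (lsq (bser sc dx V u)))) (Cw Zs * Ch R)"
      by (rule repB_bmult[OF rlw rZ bCw bCh])
    have r4: "repB (bmult (bz lvar) (bw (lsq (bser sc dx V u)))) (Ch Zs * Cw R)"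
      by (rule repB_bmult[OF rlz rW bCh bCw])
    show ?thesis unfolding Knum_def Let_def K_def H_def
      by (intro repB_bsub repB_bscale repB_badd r1 r2 r3 r4)
  qed
  define Dx where "Dx = Ch f * Cw (Sh dx (-1) g) - Cw g * Ch (Sh dx 1 f)"
  have bD: "bbX Dx" unfolding Dx_def by (intro bbX_diff bbX_mult bCw bCh)
  have rD: "repB (Dnum dx phi phis) Dx"
  proof -
    have r1: "repB (bmult (bz (wser phi)) (bw (shiftd dx (-1) (wser phis)))) (Ch f * Cw (Sh dx (-1) g))"
      unfolding Ch_def Cw_def
      by (rule repB_bmult[OF repB_bz[OF rf] repB_bw[OF repL_shiftd'[OF dx rg]] bbX_const bbX_wconst])
    have r2: "repB (bmult (bw (wser phis)) (bz (shiftd dx 1 (wser phi)))) (Cw g * Ch (Sh dx 1 f))"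
      unfolding Ch_def Cw_def
      by (rule repB_bmult[OF repB_bw[OF rg] repB_bz[OF repL_shiftd'[OF dx rf]] bbX_wconst bbX_const])
    show ?thesis unfolding Dnum_def Dx_def by (rule repB_bsub[OF r1 r2])
  qed
  obtain fi where fi: "f * fi = 1" and fineg: "\<forall>k<0. fi $$ k = 0" using fls_inverse_ex[OF f0 fneg] by blast
  obtain gi where gi: "g * gi = 1" and gineg: "\<forall>k<0. gi $$ k = 0" using fls_inverse_ex[OF g0 gneg] by blast
  have Q1: "repB (bquot (bw (wser phi)) (bz (wser phi))) (Ch fi * Cw f)"
  proof -
    have "Ch fi * Ch f = 1" using fi hCh by (simp add: ishom_mult[symmetric] ishom_one mult.commute)
    then show ?thesis
      using bquot_rep[OF repB_bz[OF rf] bbX_const repB_bw[OF rf] bbX_wconst, of "Ch fi"]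
        bbX_mult[OF bCh bCw, of fi f] unfolding Ch_def Cw_def by blast
  qed
  have Q2: "repB (bquot (bz (wser phis)) (bw (wser phis))) (Cw gi * Ch g)"
  proof -
    have "Cw gi * Cw g = 1" using gi hCw by (simp add: ishom_mult[symmetric] ishom_one mult.commute)
    then show ?thesis
      using bquot_rep[OF repB_bw[OF rg] bbX_wconst repB_bz[OF rg] bbX_const, of "Cw gi"]
        bbX_mult[OF bCw bCh, of gi g] unfolding Ch_def Cw_def by blast
  qed
  have rhs1: "repB (bmult (bz (lsq (bser sc dx V u)))
             (bmult (bquot (bw (wser phi)) (bz (wser phi))) (Dnum dx phi phis))) (Ch R * ((Ch fi * Cw f) * Dx))"
    by (intro repB_bmult[OF rZ _ bCh] repB_bmult[OF Q1 rD] bbX_mult bCh bCw bD)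
  have rhs2: "repB (bmult (bw (lsq (bser sc dx V u)))
             (bmult (bquot (bz (wser phis)) (bw (wser phis))) (Dnum dx phi phis))) (Cw R * ((Cw gi * Ch g) * Dx))"
    by (intro repB_bmult[OF rW _ bCw] repB_bmult[OF Q2 rD] bbX_mult bCh bCw bD)
  have rhs3: "repB (bmult (bmult (bz (wser phis)) (bw (wser phi))) (Dnum dx phi phis)) ((Ch g * Cw f) * Dx)"
    unfolding Ch_def Cw_def
    by (intro repB_bmult[OF repB_bmult[OF repB_bz[OF rg] repB_bw[OF rf] bbX_const bbX_wconst] rD]
        bbX_mult bbX_const bbX_wconst bD[unfolded Ch_def Cw_def])
  have key: "K = (Ch g * Cw f) * Dx"
  proof -
    define h :: "'a ts fls fls" where "h = fls_const (fls_const H)"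
    have h2: "2 * h = 1"
    proof -
      have "2 * h = Ch (fls_const (2 * H))"
        unfolding h_def Ch_def by (simp add: fls_const_mult_const[symmetric])
      then show ?thesis using H2 by (simp add: Ch_def)
    qed
    have DR: "fmap d R = fmap d f * g + f * fmap d g" unfolding R_def by (rule fmap_der_mult[OF d])
    have Wz: "Ch f * Ch (fmap d g) - Ch (fmap d f) * Ch g - 2 * (Ch Zs * (Ch f * Ch g)) = - (2 * Ch Zs)"
    proof -
      have "Ch (f * fmap d g - fmap d f * g - 2 * (Zs * (f * g))) = Ch (- (2 * Zs))" using W by simp
      then show ?thesis by (simp add: ishom_diff[OF hCh] ishom_mult[OF hCh] ishom_uminus[OF hCh] ishom_numeral[OF hCh])
    qed
    have Ww: "Cw f * Cw (fmap d g) - Cw (fmap d f) * Cw g - 2 * (Cw Zs * (Cw f * Cw g)) = - (2 * Cw Zs)"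
    proof -
      have "Cw (f * fmap d g - fmap d f * g - 2 * (Zs * (f * g))) = Cw (- (2 * Zs))" using W by simp
      then show ?thesis by (simp add: ishom_diff[OF hCw] ishom_mult[OF hCw] ishom_uminus[OF hCw] ishom_numeral[OF hCw])
    qed
    have KE: "K = h * ((Ch f * Ch g) * (Cw (fmap d f) * Cw g + Cw f * Cw (fmap d g))
        - (Cw f * Cw g) * (Ch (fmap d f) * Ch g + Ch f * Ch (fmap d g)))
        - (Cw Zs * (Ch f * Ch g) + Ch Zs * (Cw f * Cw g))"
      unfolding K_def h_def DDCh DDCw DR
      by (simp add: R_def ishom_mult[OF hCh] ishom_mult[OF hCw] ishom_add[OF hCh] ishom_add[OF hCw])
    have DxE: "Dx = Ch f * (Cw (fmap d g) - Cw Zs * Cw g) - Cw g * (Ch (fmap d f) + Ch Zs * Ch f)"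
      unfolding Dx_def Sh1 Shm1
      by (simp add: ishom_mult[OF hCh] ishom_mult[OF hCw] ishom_add[OF hCh] ishom_diff[OF hCw])
    show ?thesis unfolding KE DxE by (rule final_alg[OF h2 Wz Ww])
  qed
  have e1: "Ch R * ((Ch fi * Cw f) * Dx) = (Ch g * Cw f) * Dx"
  proof -
    have "Ch fi * Ch f = 1" using fi hCh by (simp add: ishom_mult[symmetric] ishom_one mult.commute)
    moreover have "Ch R * ((Ch fi * Cw f) * Dx) = (Ch fi * Ch f) * ((Ch g * Cw f) * Dx)"
      unfolding R_def using hCh by (simp add: ishom_mult mult_ac)
    ultimately show ?thesis by simp
  qed
  have e2: "Cw R * ((Cw gi * Ch g) * Dx) = (Ch g * Cw f) * Dx"
  proof -
    have "Cw gi * Cw g = 1" using gi hCw by (simp add: ishom_mult[symmetric] ishom_one mult.commute)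
    moreover have "Cw R * ((Cw gi * Ch g) * Dx) = (Cw gi * Cw g) * ((Ch g * Cw f) * Dx)"
      unfolding R_def using hCw by (simp add: ishom_mult mult_ac)
    ultimately show ?thesis by simp
  qed
  show ?thesis
    using repB_eq[OF rK, of _] rhs1 rhs2 rhs3 key e1 e2 by (metis repB_eq)
qed


end
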